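(* Let $0<p<1$ and flip a coin showing heads (H) with probability $p$ and tails (T) with probability $1-p$ independently until a prescribed string $S$ first appears as consecutive flips; let $Y$ be the number of flips. Then for every integer $n\ge1$: if $S=\mathrm{H}^k$ with $k\ge1$, \[ E(Y^n) = \sum_{\pi\in\Pi_n} (-1)^{n-|\pi|} |\pi|! \prod_{B\in \pi} \sum_{i=1}^k \frac{i^{|B|} - (i-1)^{|B|}}{p^i}; \] if $S=\mathrm{H}^k\mathrm{T}^\ell$ with $k,\ell\ge1$, \[ E(Y^n) = \sum_{\pi\in\Pi_n} (-1)^{n-|\pi|} |\pi|! \prod_{B\in \pi} \frac{(k+\ell)^{|B|}-(k+\ell-1)^{|B|}}{p^k(1-p)^\ell}. \]
   Context: $\Pi_n$ is the set of set partitions of $\{1,\dots,n\}$; $|\pi|$ is the number of blocks of $\pi$ and $|B|$ the size of block $B$. Convention $0^0=1$. *)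

theory Defs
  imports "HOL-Probability.Probability" "HOL-Library.Disjoint_Sets"
begin

text \<open>Infinite sequence of independent coin flips; True = heads (probability p), False = tails.\<close>
definition coin_space :: "real \<Rightarrow> bool stream measure" where
  "coin_space p = stream_space (measure_pmf (bernoulli_pmf p))"

definition waiting_time :: "bool list \<Rightarrow> bool stream \<Rightarrow> nat" where
  "waiting_time S \<omega> = (LEAST m. length S \<le> m \<and> drop (m - length S) (stake m \<omega>) = S)"

definition set_partitions :: "nat \<Rightarrow> nat set set set" where
  "set_partitions n = {P. partition_on {1..n} P}"

end

theory Submission
  imports Defs "HOL-Computational_Algebra.Formal_Power_Series"
begin

definition Phi :: "(nat \<Rightarrow> real) \<Rightarrow> 'a set \<Rightarrow> real" where
  "Phi a A = (\<Sum>P\<in>{P. partition_on A P}. fact (card P) * (\<Prod>B\<in>P. a (card B)))"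

lemma Phi_empty: "Phi a {} = 1"
  by (simp add: Phi_def partition_on_empty)

lemma Phi_rec:
  assumes fin: "finite A" and ne: "A \<noteq> {}"
  shows "Phi a A = (\<Sum>B\<in>Pow A - {{}}. a (card B) * Phi a (A - B))"
proof -
  define \<phi> where "\<phi> = (\<lambda>(B::'a set) (P'::'a set set). a (card B) * (fact (card P') * (\<Prod>B'\<in>P'. a (card B'))))"
  have step1: "fact (card P) * (\<Prod>B\<in>P. a (card B)) = (\<Sum>B\<in>P. \<phi> B (P - {B}))"
    if P: "partition_on A P" for P
  proof -
    have finP: "finite P" using finite_elements[OF fin P] .
    have "P \<noteq> {}" using P ne by (auto simp: partition_on_def)
    then obtain m where m: "card P = Suc m" using finP by (cases "card P") auto
    have "\<phi> B (P - {B}) = fact m * (\<Prod>B\<in>P. a (card B))" if "B \<in> P" for B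
      using that finP m by (simp add: \<phi>_def prod.remove[of P B] card_Diff_singleton)
    then have "(\<Sum>B\<in>P. \<phi> B (P - {B})) = card P * (fact m * (\<Prod>B\<in>P. a (card B)))"
      by simp
    also have "\<dots> = fact (card P) * (\<Prod>B\<in>P. a (card B))" using m by simp
    finally show ?thesis by simp
  qed
  have "Phi a A = (\<Sum>P\<in>{P. partition_on A P}. \<Sum>B\<in>P. \<phi> B (P - {B}))"
    unfolding Phi_def by (rule sum.cong) (auto simp: step1)
  also have "\<dots> = (\<Sum>(P,B)\<in>(SIGMA P:{P. partition_on A P}. P). \<phi> B (P - {B}))"
    by (rule sum.Sigma) (auto intro: finitely_many_partition_on fin finite_elements)
  also have "\<dots> = (\<Sum>(B,P')\<in>(SIGMA B:Pow A - {{}}. {P'. partition_on (A - B) P'}). \<phi> B P')"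
  proof (rule sum.reindex_bij_witness[where j = "\<lambda>(P,B). (B, P - {B})" and i = "\<lambda>(B,P'). (insert B P', B)"])
    fix x assume x: "x \<in> (SIGMA P:{P. partition_on A P}. P)"
    then obtain P B where xe: "x = (P,B)" and P: "partition_on A P" and B: "B \<in> P" by auto
    show "(case case x of (P, B) \<Rightarrow> (B, P - {B}) of (B, P') \<Rightarrow> (insert B P', B)) = x"
      using xe B by auto
    have d: "disjnt B (\<Union>(P - {B}))" using P B
      by (auto simp: partition_on_def disjnt_def disjoint_def)
    have PP: "P = insert B (P - {B})" using B by auto
    have "partition_on A (insert B (P - {B}))" using P PP by simp
    then have "partition_on (A - B) (P - {B}) \<and> B \<subseteq> A \<and> B \<noteq> {}"
      using partition_on_insert[OF d] by blast
    then show "(case x of (P, B) \<Rightarrow> (B, P - {B})) \<in> (SIGMA B:Pow A - {{}}. {P'. partition_on (A - B) P'})"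
      using xe by auto
    show "(case case x of (P, B) \<Rightarrow> (B, P - {B}) of (B, x) \<Rightarrow> \<phi> B x) = (case x of (P, B) \<Rightarrow> \<phi> B (P - {B}))"
      using xe by simp
  next
    fix y assume y: "y \<in> (SIGMA B:Pow A - {{}}. {P'. partition_on (A - B) P'})"
    then obtain B P' where ye: "y = (B,P')" and B: "B \<subseteq> A" "B \<noteq> {}" and P': "partition_on (A - B) P'" by auto
    have U: "\<Union>P' = A - B" using P' by (simp add: partition_on_def)
    have d: "disjnt B (\<Union>P')" using U by (auto simp: disjnt_def)
    have nin: "B \<notin> P'" using U B by auto
    show "(case case y of (B, P') \<Rightarrow> (insert B P', B) of (P, B) \<Rightarrow> (B, P - {B})) = y"
      using ye nin by auto
    show "(case y of (B, P') \<Rightarrow> (insert B P', B)) \<in> (SIGMA P:{P. partition_on A P}. P)"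
      using ye partition_on_insert[OF d, of A] B P' by auto
  qed
  also have "\<dots> = (\<Sum>B\<in>Pow A - {{}}. \<Sum>P'\<in>{P'. partition_on (A - B) P'}. \<phi> B P')"
    by (rule sum.Sigma[symmetric]) (auto intro: finitely_many_partition_on fin)
  also have "\<dots> = (\<Sum>B\<in>Pow A - {{}}. a (card B) * Phi a (A - B))"
    by (simp add: \<phi>_def Phi_def sum_distrib_left)
  finally show ?thesis .
qed

lemma Phi_rec_card:
  assumes fin: "finite A" and ne: "A \<noteq> {}"
    and Q: "\<And>B. B \<subseteq> A \<Longrightarrow> B \<noteq> {} \<Longrightarrow> Phi a (A - B) = Q (card A - card B)"
  shows "Phi a A = (\<Sum>j=1..card A. of_nat (card A choose j) * a j * Q (card A - j))"
proof -
  have "Phi a A = (\<Sum>B\<in>Pow A - {{}}. a (card B) * Q (card A - card B))"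
    using Phi_rec[OF fin ne] Q by (auto intro!: sum.cong)
  also have "\<dots> = (\<Sum>j=1..card A. \<Sum>B\<in>{B. B \<in> Pow A - {{}} \<and> card B = j}. a (card B) * Q (card A - card B))"
  proof (rule sum.group[symmetric])
    show "finite (Pow A - {{}})" using fin by simp
    show "card ` (Pow A - {{}}) \<subseteq> {1..card A}"
    proof
      fix j assume "j \<in> card ` (Pow A - {{}})"
      then obtain B where B: "B \<subseteq> A" "B \<noteq> {}" "j = card B" by auto
      have "finite B" using B fin finite_subset by blast
      then show "j \<in> {1..card A}" using B card_mono[OF fin B(1)] by (auto simp: Suc_le_eq card_gt_0_iff)
    qed
  qed simp
  also have "\<dots> = (\<Sum>j=1..card A. of_nat (card A choose j) * a j * Q (card A - j))"
  proof (rule sum.cong[OF refl])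
    fix j assume j: "j \<in> {1..card A}"
    have eq: "{B. B \<in> Pow A - {{}} \<and> card B = j} = {B. B \<subseteq> A \<and> card B = j}"
      using j by auto
    show "(\<Sum>B\<in>{B. B \<in> Pow A - {{}} \<and> card B = j}. a (card B) * Q (card A - card B)) =
          of_nat (card A choose j) * a j * Q (card A - j)"
      unfolding eq using n_subsets[OF fin, of j] by simp
  qed
  finally show ?thesis .
qed

lemma Phi_card:
  "finite (A::nat set) \<Longrightarrow> Phi a A = Phi a {1..card A}"
proof (induction "card A" arbitrary: A rule: less_induct)
  case less
  show ?case
  proof (cases "A = {}")
    case True then show ?thesis by (simp add: Phi_empty)
  next
    case False
    define Q where "Q = (\<lambda>m::nat. Phi a {1..m})"
    have h: "Phi a X = (\<Sum>j=1..card X. of_nat (card X choose j) * a j * Q (card X - j))"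
      if X: "finite X" "X \<noteq> {}" "card X = card A" for X :: "nat set"
    proof (rule Phi_rec_card[OF X(1,2)])
      fix B assume B: "B \<subseteq> X" "B \<noteq> {}"
      have cB: "card B > 0" using B X(1) by (auto simp: card_gt_0_iff intro: finite_subset)
      have c: "card (X - B) = card X - card B" using B X(1) by (simp add: card_Diff_subset finite_subset)
      have "card (X - B) < card A" using c cB X(3) B X(1) card_mono[OF X(1) B(1)] by linarith
      then show "Phi a (X - B) = Q (card X - card B)"
        using less.hyps[of "X - B"] X(1) c by (simp add: Q_def)
    qed
    have "Phi a A = (\<Sum>j=1..card A. of_nat (card A choose j) * a j * Q (card A - j))"
      using h[of A] less.prems False by simp
    moreover have "Phi a {1..card A} = (\<Sum>j=1..card A. of_nat (card A choose j) * a j * Q (card A - j))"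
      using h[of "{1..card A}"] False less.prems by (simp add: Suc_le_eq card_gt_0_iff)
    ultimately show ?thesis by simp
  qed
qed


lemma Phi_interval_rec:
  assumes "n \<ge> 1"
  shows "Phi a {1..n} = (\<Sum>j=1..n. of_nat (n choose j) * a j * Phi a {1..n-j})"
proof -
  have "Phi a {1..n} = (\<Sum>j=1..card {1..n}. of_nat (card {1..n} choose j) * a j * Phi a {1..card {1..n}-j})"
  proof (rule Phi_rec_card)
    show "{1..n} \<noteq> {}" using assms by simp
    fix B assume B: "B \<subseteq> {1..n}" "B \<noteq> {}"
    then show "Phi a ({1..n} - B) = Phi a {1..card {1..n} - card B}"
      using Phi_card[of "{1..n} - B" a] by (simp add: card_Diff_subset finite_subset)
  qed simp
  then show ?thesis by simp
qed


lemma sign_prod: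
  assumes P: "partition_on {1..n} P"
  shows "(-1) ^ (n - card P) * (\<Prod>B\<in>P. G (card B)) = (\<Prod>B\<in>P. (-1) ^ (card B - 1) * (G (card B) :: real))"
proof -
  have finP: "finite P" using finite_elements[OF _ P] by simp
  have finB: "\<And>B. B \<in> P \<Longrightarrow> finite B" using P by (auto simp: partition_on_def intro: finite_subset)
  have ne: "\<And>B. B \<in> P \<Longrightarrow> card B \<ge> 1" using P finB by (fastforce simp: partition_on_def Suc_le_eq card_gt_0_iff)
  have "card (\<Union>P) = sum card P"
    using P finB by (intro card_Union_disjoint) (auto simp: partition_on_def)
  then have sc: "sum card P = n" using P by (simp add: partition_on_def)
  have "(\<Sum>B\<in>P. card B - 1) + card P = (\<Sum>B\<in>P. (card B - 1) + 1)"
    by (simp only: sum.distrib) simp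
  also have "\<dots> = sum card P" using ne by (intro sum.cong) (auto simp: Suc_le_eq)
  finally have "(\<Sum>B\<in>P. card B - 1) = n - card P" using sc by simp
  then have "(-1::real) ^ (n - card P) = (\<Prod>B\<in>P. (-1) ^ (card B - 1))"
    by (metis power_sum)
  then show ?thesis by (simp add: prod.distrib)
qed

definition psum :: "(nat \<Rightarrow> real) \<Rightarrow> nat \<Rightarrow> real" where
  "psum G n = (\<Sum>P\<in>set_partitions n. (-1) ^ (n - card P) * fact (card P) * (\<Prod>B\<in>P. G (card B)))"

definition asg :: "(nat \<Rightarrow> real) \<Rightarrow> nat \<Rightarrow> real" where
  "asg G j = (if j = 0 then 0 else (-1) ^ (j - 1) * G j)"

lemma psum_Phi: "psum G n = Phi (\<lambda>j. (-1) ^ (j - 1) * G j) {1..n}"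
  unfolding psum_def Phi_def set_partitions_def
proof (rule sum.cong[OF refl])
  fix P assume "P \<in> {P. partition_on {1..n} P}"
  then show "(-1) ^ (n - card P) * fact (card P) * (\<Prod>B\<in>P. G (card B)) =
         fact (card P) * (\<Prod>B\<in>P. (-1) ^ (card B - 1) * G (card B))"
    using sign_prod[of n P G] by (simp add: mult_ac)
qed

definition egf :: "(nat \<Rightarrow> real) \<Rightarrow> real fps" where
  "egf x = Abs_fps (\<lambda>n. x n / fact n)"

lemma egf_nth[simp]: "fps_nth (egf x) n = x n / fact n"
  by (simp add: egf_def)

lemma egf_mult: "egf x * egf y = egf (\<lambda>n. \<Sum>j\<le>n. real (n choose j) * x j * y (n - j))"
proof (rule fps_ext)
  fix n
  have "fps_nth (egf x * egf y) n = (\<Sum>i=0..n. x i / fact i * (y (n - i) / fact (n - i)))"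
    by (simp add: fps_mult_nth)
  also have "\<dots> = (\<Sum>i\<le>n. real (n choose i) * x i * y (n - i) / fact n)"
    by (rule sum.cong) (auto simp: binomial_fact field_simps)
  also have "\<dots> = fps_nth (egf (\<lambda>n. \<Sum>j\<le>n. real (n choose j) * x j * y (n - j))) n"
    by (simp add: sum_divide_distrib)
  finally show "fps_nth (egf x * egf y) n = fps_nth (egf (\<lambda>n. \<Sum>j\<le>n. real (n choose j) * x j * y (n - j))) n" .
qed

lemma egf_exp: "egf (\<lambda>n. c ^ n) = fps_exp c"
  by (rule fps_ext) simp

lemma egf_eqD: "egf x = egf y \<Longrightarrow> x n = y n"
  by (metis egf_nth fact_nonzero nonzero_divide_eq_eq)

lemma psum_egf: "egf (psum G) * (1 - egf (asg G)) = 1"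
proof -
  have "egf (psum G) = 1 + egf (asg G) * egf (psum G)"
  proof (rule fps_ext)
    fix n
    show "fps_nth (egf (psum G)) n = fps_nth (1 + egf (asg G) * egf (psum G)) n"
    proof (cases "n = 0")
      case True
      then show ?thesis by (simp add: psum_Phi Phi_empty asg_def)
    next
      case False
      have "fps_nth (egf (asg G) * egf (psum G)) n = (\<Sum>j\<le>n. real (n choose j) * asg G j * psum G (n - j)) / fact n"
        by (simp add: egf_mult)
      also have "(\<Sum>j\<le>n. real (n choose j) * asg G j * psum G (n - j)) =
                 (\<Sum>j=1..n. real (n choose j) * ((-1) ^ (j - 1) * G j) * Phi (\<lambda>j. (-1) ^ (j - 1) * G j) {1..n - j})"
      proof -
        have "(\<Sum>j\<le>n. real (n choose j) * asg G j * psum G (n - j)) =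
              (\<Sum>j=0..n. real (n choose j) * asg G j * psum G (n - j))"
          by (simp add: atLeast0AtMost)
        also have "\<dots> = (\<Sum>j=Suc 0..n. real (n choose j) * asg G j * psum G (n - j))"
          by (subst sum.atLeast_Suc_atMost) (auto simp: asg_def)
        finally show ?thesis by (simp add: asg_def psum_Phi)
      qed
      also have "\<dots> = psum G n"
        using Phi_interval_rec[of n "\<lambda>j. (-1) ^ (j - 1) * G j"] False by (simp add: psum_Phi)
      finally show ?thesis using False by simp
    qed
  qed
  then show ?thesis by (simp add: algebra_simps)
qed

lemma fps_cancel:
  fixes X Y H R :: "real fps"
  assumes "X * H = R" "Y * H = R" "fps_nth H 0 \<noteq> 0"
  shows "X = Y"
proof -
  have "(X - Y) * H = 0" using assms by (simp add: algebra_simps)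
  moreover have "H \<noteq> 0" using assms(3) by auto
  ultimately show ?thesis by simp
qed


definition GH :: "real \<Rightarrow> nat \<Rightarrow> nat \<Rightarrow> real" where
  "GH p k j = (\<Sum>i=1..k. (real i ^ j - real (i - 1) ^ j) / p ^ i)"

definition GN :: "real \<Rightarrow> nat \<Rightarrow> nat \<Rightarrow> nat \<Rightarrow> real" where
  "GN p k l j = (real (k + l) ^ j - real (k + l - 1) ^ j) / (p ^ k * (1 - p) ^ l)"

lemma neg_pow_aux: "j \<noteq> 0 \<Longrightarrow> (-1::real) ^ (j - 1) * (a ^ j - b ^ j) = - ((-a) ^ j - (-b) ^ j)"
  by (cases j) (auto simp: power_minus' algebra_simps)

lemma egf_asg_GH:
  "egf (asg (GH p k)) = - (\<Sum>i=1..k. fps_const (1 / p ^ i) * (fps_exp (- real i) - fps_exp (- real (i - 1))))"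
proof (rule fps_ext)
  fix j
  show "fps_nth (egf (asg (GH p k))) j =
        fps_nth (- (\<Sum>i=1..k. fps_const (1 / p ^ i) * (fps_exp (- real i) - fps_exp (- real (i - 1))))) j"
  proof (cases "j = 0")
    case True then show ?thesis by (simp add: asg_def fps_sum_nth)
  next
    case False
    have "asg (GH p k) j = (\<Sum>i=1..k. (-1) ^ (j - 1) * (real i ^ j - real (i - 1) ^ j) / p ^ i)"
      using False by (simp add: asg_def GH_def sum_distrib_left)
    also have "\<dots> = - (\<Sum>i=1..k. ((- real i) ^ j - (- real (i - 1)) ^ j) / p ^ i)"
      using neg_pow_aux[OF False] by (simp add: sum_negf[symmetric] minus_divide_left)
    finally have a: "asg (GH p k) j = - (\<Sum>i=1..k. ((- real i) ^ j - (- real (i - 1)) ^ j) / p ^ i)" .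
    have "fps_nth (- (\<Sum>i=1..k. fps_const (1 / p ^ i) * (fps_exp (- real i) - fps_exp (- real (i - 1))))) j
       = - (\<Sum>i=1..k. (((- real i) ^ j - (- real (i - 1)) ^ j) / p ^ i) / fact j)"
      by (simp add: fps_sum_nth diff_divide_distrib mult.commute)
    also have "\<dots> = asg (GH p k) j / fact j"
      unfolding a by (simp add: sum_divide_distrib)
    finally show ?thesis by simp
  qed
qed

lemma egf_asg_GN:
  "egf (asg (GN p k l)) = - fps_const (1 / (p ^ k * (1 - p) ^ l)) * (fps_exp (- real (k + l)) - fps_exp (- real (k + l - 1)))"
proof (rule fps_ext)
  fix j
  show "fps_nth (egf (asg (GN p k l))) j = fps_nth (- fps_const (1 / (p ^ k * (1 - p) ^ l)) * (fps_exp (- real (k + l)) - fps_exp (- real (k + l - 1)))) j"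
  proof (cases "j = 0")
    case True then show ?thesis by (simp add: asg_def)
  next
    case False
    have "asg (GN p k l) j = - (((- real (k + l)) ^ j - (- real (k + l - 1)) ^ j)) / (p ^ k * (1 - p) ^ l)"
      using False neg_pow_aux[OF False, of "real (k + l)" "real (k + l - 1)"]
      by (simp add: asg_def GN_def)
    then show ?thesis
      by (simp add: diff_divide_distrib field_simps)
  qed
qed

lemma F_H:
  assumes p: "p \<noteq> 0"
  shows "egf (psum (GH p k)) * (fps_const (p ^ k) * fps_exp (real k) +
           (\<Sum>i=1..k. fps_const (p ^ (k - i)) * (fps_exp (real (k - i)) - fps_exp (real (k - i + 1)))))
         = fps_const (p ^ k) * fps_exp (real k)"
proof -
  define Z where "Z = fps_const (p ^ k) * fps_exp (real k)"
  have t: "fps_const (1 / p ^ i) * (fps_exp (- real i) - fps_exp (- real (i - 1))) * Z =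
           fps_const (p ^ (k - i)) * (fps_exp (real (k - i)) - fps_exp (real (k - i + 1)))"
    if i: "i \<in> {1..k}" for i
  proof -
    have c: "fps_const (1 / p ^ i) * fps_const (p ^ k) = fps_const (p ^ (k - i))"
      using i p by (simp add: power_diff)
    have e: "(fps_exp (- real i) - fps_exp (- real (i - 1))) * fps_exp (real k)
             = fps_exp (real (k - i)) - fps_exp (real (k - i + 1))"
      using i by (simp add: algebra_simps fps_exp_add_mult[symmetric] of_nat_diff)
    have "fps_const (1 / p ^ i) * (fps_exp (- real i) - fps_exp (- real (i - 1))) * Z
         = (fps_const (1 / p ^ i) * fps_const (p ^ k)) * ((fps_exp (- real i) - fps_exp (- real (i - 1))) * fps_exp (real k))"
      by (simp add: Z_def mult_ac)
    also have "\<dots> = fps_const (p ^ (k - i)) * (fps_exp (real (k - i)) - fps_exp (real (k - i + 1)))"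
      by (simp only: c e)
    finally show ?thesis .
  qed
  have "(1 - egf (asg (GH p k))) * Z = (1 + (\<Sum>i=1..k. fps_const (1 / p ^ i) * (fps_exp (- real i) - fps_exp (- real (i - 1))))) * Z"
    by (simp add: egf_asg_GH)
  also have "\<dots> = Z + (\<Sum>i=1..k. fps_const (1 / p ^ i) * (fps_exp (- real i) - fps_exp (- real (i - 1))) * Z)"
    by (simp only: distrib_right sum_distrib_right mult_1)
  also have "\<dots> = fps_const (p ^ k) * fps_exp (real k) +
           (\<Sum>i=1..k. fps_const (p ^ (k - i)) * (fps_exp (real (k - i)) - fps_exp (real (k - i + 1))))"
    using t by (simp add: Z_def)
  finally have "egf (psum (GH p k)) * (fps_const (p ^ k) * fps_exp (real k) +
           (\<Sum>i=1..k. fps_const (p ^ (k - i)) * (fps_exp (real (k - i)) - fps_exp (real (k - i + 1)))))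
      = (egf (psum (GH p k)) * (1 - egf (asg (GH p k)))) * Z"
    by (simp add: mult.assoc)
  then show ?thesis using psum_egf by (simp add: Z_def)
qed

lemma ring_aux1: "(1 - (- c * D)) * (cP * EN) = cP * EN + (c * cP) * (D * EN)" for c cP D EN :: "'a::comm_ring_1"
  by (simp add: algebra_simps)

lemma F_N:
  assumes p: "p ^ k * (1 - p) ^ l \<noteq> 0" and kl: "k + l \<ge> 1"
  shows "egf (psum (GN p k l)) * (fps_const (p ^ k * (1 - p) ^ l) * fps_exp (real (k + l)) + 1 - fps_exp 1)
         = fps_const (p ^ k * (1 - p) ^ l) * fps_exp (real (k + l))"
proof -
  define P where "P = p ^ k * (1 - p) ^ l"
  define Z where "Z = fps_const P * fps_exp (real (k + l))"
  have e: "(fps_exp (- real (k + l)) - fps_exp (- real (k + l - 1))) * fps_exp (real (k + l)) = 1 - fps_exp 1"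
    using kl by (simp add: algebra_simps fps_exp_add_mult[symmetric] of_nat_diff)
  define D where "D = fps_exp (- real (k + l)) - fps_exp (- real (k + l - 1))"
  define EN where "EN = fps_exp (real (k + l))"
  have "(1 - egf (asg (GN p k l))) * Z = (1 - (- fps_const (1 / P) * D)) * (fps_const P * EN)"
    unfolding egf_asg_GN Z_def by (simp only: D_def[symmetric] EN_def[symmetric] P_def[symmetric])
  also have "\<dots> = fps_const P * EN + (fps_const (1 / P) * fps_const P) * (D * EN)"
    by (rule ring_aux1)
  also have "\<dots> = Z + (fps_const (1 / P) * fps_const P) * (D * EN)"
    by (simp only: Z_def EN_def)
  also have "\<dots> = Z + (fps_const (1 / P) * fps_const P) *
      ((fps_exp (- real (k + l)) - fps_exp (- real (k + l - 1))) * fps_exp (real (k + l)))"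
    by (simp only: D_def EN_def)
  also have "\<dots> = Z + 1 - fps_exp 1"
    using p e by (simp add: P_def)
  finally have "egf (psum (GN p k l)) * (Z + 1 - fps_exp 1) = (egf (psum (GN p k l)) * (1 - egf (asg (GN p k l)))) * Z"
    by (simp add: mult.assoc)
  then show ?thesis using psum_egf by (simp add: Z_def P_def)
qed


locale coin =
  fixes p :: real
  assumes p_pos: "0 < p" and p_lt1: "p < 1"
begin

abbreviation "Mb \<equiv> measure_pmf (bernoulli_pmf p)"

lemma sets_Om: "sets (coin_space p) = sets (stream_space (count_space UNIV))"
  unfolding coin_space_def by (rule sets_stream_space_cong) simp

lemma space_Om[simp]: "space (coin_space p) = UNIV"
  by (simp add: coin_space_def space_stream_space)

lemma meas_Om: "f \<in> measurable (stream_space (count_space UNIV)) N \<Longrightarrow> f \<in> measurable (coin_space p) N"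
  by (subst measurable_cong_sets[OF sets_Om refl])

lemma prob_Om: "prob_space (coin_space p)"
  unfolding coin_space_def by (rule prob_space.prob_space_stream_space[OF prob_space_measure_pmf])

lemma stake_meas[measurable]: "(\<lambda>\<omega>. f (stake m \<omega>)) \<in> borel_measurable (coin_space p)"
  for f :: "bool list \<Rightarrow> ennreal"
  by (rule meas_Om, rule measurable_compose[OF measurable_stake]) simp

lemma test: "Measurable.pred (stream_space (count_space UNIV)) (\<lambda>\<omega>. \<forall>t<N. \<omega> !! (m+t) = (xs ! t :: bool))"
  by measurable

lemma sdrop_meas[measurable]: "g \<in> borel_measurable (coin_space p) \<Longrightarrow> (\<lambda>\<omega>. g (sdrop m \<omega>)) \<in> borel_measurable (coin_space p)"
  unfolding coin_space_def by (rule measurable_compose[OF measurable_sdrop]) (simp add: coin_space_def)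

lemma nn_Om:
  assumes "f \<in> borel_measurable (coin_space p)"
  shows "(\<integral>\<^sup>+\<omega>. f \<omega> \<partial>coin_space p) = (\<integral>\<^sup>+\<omega>. f (True ## \<omega>) \<partial>coin_space p) * p + (\<integral>\<^sup>+\<omega>. f (False ## \<omega>) \<partial>coin_space p) * (1 - p)"
  using prob_space.nn_integral_stream_space[OF prob_space_measure_pmf, of f "bernoulli_pmf p"] assms p_pos p_lt1
  by (simp add: coin_space_def)

lemma ofb_meas:
  assumes "Measurable.pred (stream_space (count_space UNIV)) P"
  shows "(\<lambda>\<omega>. of_bool (P \<omega>) :: ennreal) \<in> borel_measurable (coin_space p)"
  apply (rule meas_Om)
  unfolding of_bool_def using assms by measurable

lemma emeasure_Om_UNIV: "emeasure (coin_space p) UNIV = 1"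
  by (metis prob_space.emeasure_space_1 prob_Om space_Om)

lemma nn_const_Om: "(\<integral>\<^sup>+\<omega>. c \<partial>coin_space p) = c"
  by (simp add: emeasure_Om_UNIV)

lemma ring_aux2: "(b1 * g) * x + (b2 * g) * y = (b1 * x + b2 * y) * g" for b1 b2 g x y :: "'a::comm_semiring"
  by (simp add: algebra_simps)

lemma L1:
  assumes g[measurable]: "g \<in> borel_measurable (coin_space p)"
  shows "(\<integral>\<^sup>+\<omega>. f (stake m \<omega>) * g (sdrop m \<omega>) \<partial>coin_space p)
         = (\<integral>\<^sup>+\<omega>. f (stake m \<omega>) \<partial>coin_space p) * (\<integral>\<^sup>+\<omega>. g \<omega> \<partial>coin_space p)"
proof (induction m arbitrary: f)
  case 0
  have "(\<integral>\<^sup>+\<omega>. f [] * g \<omega> \<partial>coin_space p) = f [] * (\<integral>\<^sup>+\<omega>. g \<omega> \<partial>coin_space p)"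
    by (rule nn_integral_cmult[OF g])
  then show ?case by (simp add: emeasure_Om_UNIV)
next
  case (Suc m)
  have m1: "(\<lambda>\<omega>. f (stake (Suc m) \<omega>) * g (sdrop (Suc m) \<omega>)) \<in> borel_measurable (coin_space p)"
    by measurable
  have "(\<integral>\<^sup>+\<omega>. f (stake (Suc m) \<omega>) * g (sdrop (Suc m) \<omega>) \<partial>coin_space p)
      = (\<integral>\<^sup>+\<omega>. f (True # stake m \<omega>) * g (sdrop m \<omega>) \<partial>coin_space p) * p
      + (\<integral>\<^sup>+\<omega>. f (False # stake m \<omega>) * g (sdrop m \<omega>) \<partial>coin_space p) * (1 - p)"
    using nn_Om[OF m1] by simp
  also have "\<dots> = ((\<integral>\<^sup>+\<omega>. f (True # stake m \<omega>) \<partial>coin_space p) * (\<integral>\<^sup>+\<omega>. g \<omega> \<partial>coin_space p)) * p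
      + ((\<integral>\<^sup>+\<omega>. f (False # stake m \<omega>) \<partial>coin_space p) * (\<integral>\<^sup>+\<omega>. g \<omega> \<partial>coin_space p)) * (1 - p)"
    by (simp only: Suc.IH[of "\<lambda>xs. f (True # xs)"] Suc.IH[of "\<lambda>xs. f (False # xs)"])
  also have "\<dots> = ((\<integral>\<^sup>+\<omega>. f (True # stake m \<omega>) \<partial>coin_space p) * p
      + (\<integral>\<^sup>+\<omega>. f (False # stake m \<omega>) \<partial>coin_space p) * (1 - p)) * (\<integral>\<^sup>+\<omega>. g \<omega> \<partial>coin_space p)"
    by (rule ring_aux2)
  also have "(\<integral>\<^sup>+\<omega>. f (True # stake m \<omega>) \<partial>coin_space p) * p
      + (\<integral>\<^sup>+\<omega>. f (False # stake m \<omega>) \<partial>coin_space p) * (1 - p)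
      = (\<integral>\<^sup>+\<omega>. f (stake (Suc m) \<omega>) \<partial>coin_space p)"
    using nn_Om[OF stake_meas[of f "Suc m"]] by simp
  finally show ?case .
qed

lemma all_less_Suc_split: "(\<forall>t<Suc n. P t) \<longleftrightarrow> P 0 \<and> (\<forall>t<n. P (Suc t))"
  by (metis less_Suc_eq_0_disj not_less_eq zero_less_Suc)

lemma w_nonneg: "0 \<le> (\<Prod>x\<leftarrow>xs. if x then p else 1 - p)"
  using p_pos p_lt1 by (induction xs) auto

lemma L2:
  "(\<integral>\<^sup>+\<omega>. of_bool (\<forall>t<length xs. \<omega> !! t = xs ! t) \<partial>coin_space p) = ennreal (\<Prod>x\<leftarrow>xs. if x then p else 1 - p)"
proof (induction xs)
  case Nil
  then show ?case by (simp add: emeasure_Om_UNIV)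
next
  case (Cons a xs)
  have m: "(\<lambda>\<omega>. of_bool (\<forall>t<length (a # xs). \<omega> !! t = (a # xs) ! t) :: ennreal) \<in> borel_measurable (coin_space p)"
    by (rule ofb_meas) measurable
  have e: "\<And>b \<omega>. (\<forall>t<length (a # xs). (b ## \<omega>) !! t = (a # xs) ! t) \<longleftrightarrow> b = a \<and> (\<forall>t<length xs. \<omega> !! t = xs ! t)"
    by (simp add: all_less_Suc_split)
  have "(\<integral>\<^sup>+\<omega>. of_bool (\<forall>t<length (a # xs). \<omega> !! t = (a # xs) ! t) \<partial>coin_space p)
     = (\<integral>\<^sup>+\<omega>. of_bool (True = a \<and> (\<forall>t<length xs. \<omega> !! t = xs ! t)) \<partial>coin_space p) * p
     + (\<integral>\<^sup>+\<omega>. of_bool (False = a \<and> (\<forall>t<length xs. \<omega> !! t = xs ! t)) \<partial>coin_space p) * (1 - p)"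
    by (subst nn_Om[OF m]) (simp only: e)
  then show ?case
    using p_pos p_lt1 Cons.IH
    by (cases a) (simp_all add: ennreal_mult w_nonneg mult.commute)
qed

end

definition occ :: "bool list \<Rightarrow> (nat \<Rightarrow> bool) \<Rightarrow> nat \<Rightarrow> bool" where
  "occ S x j \<longleftrightarrow> length S \<le> j \<and> (\<forall>t<length S. x (j - length S + t) = S ! t)"

definition focc :: "bool list \<Rightarrow> (nat \<Rightarrow> bool) \<Rightarrow> nat \<Rightarrow> bool" where
  "focc S x j \<longleftrightarrow> occ S x j \<and> (\<forall>i<j. \<not> occ S x i)"

definition nocc :: "bool list \<Rightarrow> (nat \<Rightarrow> bool) \<Rightarrow> nat \<Rightarrow> bool" where
  "nocc S x m \<longleftrightarrow> (\<forall>i\<le>m. \<not> occ S x i)"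

lemma wt_eq: "waiting_time S \<omega> = (LEAST j. occ S (snth \<omega>) j)"
  unfolding waiting_time_def
proof (rule arg_cong[where f = Least], rule ext)
  fix m
  show "(length S \<le> m \<and> drop (m - length S) (stake m \<omega>) = S) = occ S ((!!) \<omega>) m"
  proof (cases "length S \<le> m")
    case True
    have "drop (m - length S) (stake m \<omega>) = S \<longleftrightarrow> (\<forall>t<length S. \<omega> !! (m - length S + t) = S ! t)"
      using True by (auto simp: list_eq_iff_nth_eq)
    then show ?thesis using True by (simp add: occ_def)
  qed (simp add: occ_def)
qed

lemma occ_local: "i \<le> j \<Longrightarrow> (\<forall>t<j. x t = y t) \<Longrightarrow> occ S x i = occ S y i"
  unfolding occ_def by auto

lemma focc_local: "(\<forall>t<j. x t = y t) \<Longrightarrow> focc S x j = focc S y j"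
proof -
  assume a: "\<forall>t<j. x t = y t"
  have "occ S x i = occ S y i" if "i \<le> j" for i using occ_local[OF that a] .
  then show ?thesis unfolding focc_def by auto
qed

lemma nocc_local: "(\<forall>t<m. x t = y t) \<Longrightarrow> nocc S x m = nocc S y m"
proof -
  assume a: "\<forall>t<m. x t = y t"
  have "occ S x i = occ S y i" if "i \<le> m" for i using occ_local[OF that a] .
  then show ?thesis unfolding nocc_def by auto
qed

lemma good_focc:
  assumes ex: "\<exists>j. occ S x j"
  shows "focc S x j \<longleftrightarrow> j = (LEAST j. occ S x j)"
proof -
  define Y where "Y = (LEAST j. occ S x j)"
  have oY: "occ S x Y" unfolding Y_def by (rule LeastI_ex[OF ex])
  have nY: "\<not> occ S x i" if "i < Y" for i using not_less_Least[OF that[unfolded Y_def]] .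
  have "focc S x j \<longleftrightarrow> j = Y"
  proof
    assume f: "focc S x j"
    then have o: "occ S x j" and no: "\<forall>i<j. \<not> occ S x i" by (auto simp: focc_def)
    have "Y \<le> j" unfolding Y_def using o by (rule Least_le)
    moreover have "\<not> Y < j" using no oY by auto
    ultimately show "j = Y" by simp
  next
    assume "j = Y"
    then show "focc S x j" using oY nY by (simp add: focc_def)
  qed
  then show ?thesis by (simp add: Y_def)
qed

lemma good_nocc:
  assumes ex: "\<exists>j. occ S x j"
  shows "nocc S x m \<longleftrightarrow> m < (LEAST j. occ S x j)"
proof -
  define Y where "Y = (LEAST j. occ S x j)"
  have oY: "occ S x Y" unfolding Y_def by (rule LeastI_ex[OF ex])
  have nY: "\<not> occ S x i" if "i < Y" for i using not_less_Least[OF that[unfolded Y_def]] .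
  have "nocc S x m \<longleftrightarrow> m < Y"
  proof
    assume n: "nocc S x m"
    show "m < Y"
    proof (rule ccontr)
      assume "\<not> m < Y"
      then have "Y \<le> m" by simp
      then show False using n oY by (simp add: nocc_def)
    qed
  next
    assume "m < Y"
    then show "nocc S x m" using nY by (simp add: nocc_def)
  qed
  then show ?thesis by (simp add: Y_def)
qed

lemma good_ge:
  assumes "\<exists>j. occ S x j"
  shows "length S \<le> (LEAST j. occ S x j)"
  using assms LeastI_ex[OF assms] unfolding occ_def by blast

lemma nocc_step:
  assumes n: "nocc S x (m + length S)"
  shows "nocc S x m \<and> \<not> (\<forall>t<length S. x (m + t) = S ! t)"
proof
  show "nocc S x m" using n by (auto simp: nocc_def)
  show "\<not> (\<forall>t<length S. x (m + t) = S ! t)"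
  proof
    assume "\<forall>t<length S. x (m + t) = S ! t"
    then have "occ S x (m + length S)" by (simp add: occ_def)
    then show False using n by (auto simp: nocc_def)
  qed
qed


context coin begin

lemma occ_pred[measurable]: "Measurable.pred (stream_space (count_space UNIV)) (\<lambda>\<omega>. occ S (snth \<omega>) j)"
  unfolding occ_def by measurable

lemma focc_pred[measurable]: "Measurable.pred (stream_space (count_space UNIV)) (\<lambda>\<omega>. focc S (snth \<omega>) j)"
  unfolding focc_def by measurable

lemma nocc_pred[measurable]: "Measurable.pred (stream_space (count_space UNIV)) (\<lambda>\<omega>. nocc S (snth \<omega>) j)"
  unfolding nocc_def by measurable

lemma Y_meas: "(\<lambda>\<omega>. waiting_time S \<omega>) \<in> measurable (coin_space p) (count_space UNIV)"
  unfolding wt_eq by (rule meas_Om) measurable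

lemma fY_meas: "(\<lambda>\<omega>. f (waiting_time S \<omega>)) \<in> borel_measurable (coin_space p)"
  for f :: "nat \<Rightarrow> ennreal"
  by (rule measurable_compose[OF Y_meas]) simp

lemma w_pos: "0 < (\<Prod>x\<leftarrow>xs. if x then p else 1 - p)"
  using p_pos p_lt1 by (induction xs) auto

lemma w_le1: "(\<Prod>x\<leftarrow>xs. if x then p else 1 - p) \<le> 1"
  using p_pos p_lt1 by (induction xs) (auto intro!: mult_le_one simp: w_nonneg)

lemma L12:
  assumes A: "\<And>\<omega>. A \<omega> = A' (stake m \<omega>)"
  shows "(\<integral>\<^sup>+\<omega>. of_bool (A \<omega>) * of_bool (\<forall>t<length xs. \<omega> !! (m + t) = xs ! t) \<partial>coin_space p)
       = (\<integral>\<^sup>+\<omega>. of_bool (A \<omega>) \<partial>coin_space p) * ennreal (\<Prod>x\<leftarrow>xs. if x then p else 1 - p)"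
proof -
  define G :: "bool stream \<Rightarrow> ennreal" where "G = (\<lambda>\<omega>. of_bool (\<forall>t<length xs. \<omega> !! t = xs ! t))"
  have Gm: "G \<in> borel_measurable (coin_space p)"
    unfolding G_def by (rule ofb_meas) measurable
  have "(\<integral>\<^sup>+\<omega>. of_bool (A \<omega>) * of_bool (\<forall>t<length xs. \<omega> !! (m + t) = xs ! t) \<partial>coin_space p)
      = (\<integral>\<^sup>+\<omega>. (\<lambda>ys. of_bool (A' ys)) (stake m \<omega>) * G (sdrop m \<omega>) \<partial>coin_space p)"
    by (simp add: A G_def sdrop_snth)
  also have "\<dots> = (\<integral>\<^sup>+\<omega>. of_bool (A' (stake m \<omega>)) \<partial>coin_space p) * (\<integral>\<^sup>+\<omega>. G \<omega> \<partial>coin_space p)"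
    by (rule L1[OF Gm])
  also have "\<dots> = (\<integral>\<^sup>+\<omega>. of_bool (A \<omega>) \<partial>coin_space p) * ennreal (\<Prod>x\<leftarrow>xs. if x then p else 1 - p)"
    by (simp add: A G_def L2)
  finally show ?thesis .
qed

lemma nocc_stake: "nocc S (snth \<omega>) m = nocc S (\<lambda>t. stake m \<omega> ! t) m"
  by (rule nocc_local) simp

lemma focc_stake: "focc S (snth \<omega>) m = focc S (\<lambda>t. stake m \<omega> ! t) m"
  by (rule focc_local) simp

lemma L12_nocc:
  "(\<integral>\<^sup>+\<omega>. of_bool (nocc S (snth \<omega>) m) * of_bool (\<forall>t<length xs. \<omega> !! (m + t) = xs ! t) \<partial>coin_space p)
   = (\<integral>\<^sup>+\<omega>. of_bool (nocc S (snth \<omega>) m) \<partial>coin_space p) * ennreal (\<Prod>x\<leftarrow>xs. if x then p else 1 - p)"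
  by (rule L12[where A' = "\<lambda>ys. nocc S (\<lambda>t. ys ! t) m"]) (rule nocc_stake)

lemma L12_focc:
  "(\<integral>\<^sup>+\<omega>. of_bool (focc S (snth \<omega>) m) * of_bool (\<forall>t<length xs. \<omega> !! (m + t) = xs ! t) \<partial>coin_space p)
   = (\<integral>\<^sup>+\<omega>. of_bool (focc S (snth \<omega>) m) \<partial>coin_space p) * ennreal (\<Prod>x\<leftarrow>xs. if x then p else 1 - p)"
  by (rule L12[where A' = "\<lambda>ys. focc S (\<lambda>t. ys ! t) m"]) (rule focc_stake)

lemma ofb_le1: "(\<integral>\<^sup>+\<omega>. of_bool (Q \<omega>) \<partial>coin_space p) \<le> 1"
proof -
  have "(\<integral>\<^sup>+\<omega>. of_bool (Q \<omega>) \<partial>coin_space p) \<le> (\<integral>\<^sup>+\<omega>. 1 \<partial>coin_space p)"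
    by (rule nn_integral_mono) simp
  then show ?thesis by (simp add: emeasure_Om_UNIV)
qed

lemma AE_good:
  assumes S: "S \<noteq> []"
  shows "AE \<omega> in coin_space p. \<exists>j. occ S (snth \<omega>) j"
proof -
  define P where "P = (\<Prod>x\<leftarrow>S. if x then p else 1 - p)"
  have P0: "0 < P" and P1: "P \<le> 1" using w_pos w_le1 by (auto simp: P_def)
  define N where "N = length S"
  define \<beta> where "\<beta> m = (\<integral>\<^sup>+\<omega>. of_bool (nocc S (snth \<omega>) m) \<partial>coin_space p)" for m
  define r where "r m = enn2real (\<beta> m)" for m
  have \<beta>le: "\<beta> m \<le> 1" for m unfolding \<beta>_def by (rule ofb_le1)
  have \<beta>top: "\<beta> m < top" for m using \<beta>le[of m] by (rule le_less_trans) simp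
  have \<beta>r: "\<beta> m = ennreal (r m)" for m
    unfolding r_def using \<beta>top[of m] by (simp add: ennreal_enn2real)
  have r0: "0 \<le> r m" for m by (simp add: r_def)
  have step: "\<beta> (m + N) + \<beta> m * P \<le> \<beta> m" for m
  proof -
    have "\<beta> (m + N) + \<beta> m * P = (\<integral>\<^sup>+\<omega>. of_bool (nocc S (snth \<omega>) (m + N)) \<partial>coin_space p)
        + (\<integral>\<^sup>+\<omega>. of_bool (nocc S (snth \<omega>) m) * of_bool (\<forall>t<length S. \<omega> !! (m + t) = S ! t) \<partial>coin_space p)"
      unfolding \<beta>_def P_def by (subst L12_nocc) simp
    also have "\<dots> = (\<integral>\<^sup>+\<omega>. of_bool (nocc S (snth \<omega>) (m + N)) + of_bool (nocc S (snth \<omega>) m) * of_bool (\<forall>t<length S. \<omega> !! (m + t) = S ! t) \<partial>coin_space p)"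
      by (rule nn_integral_add[symmetric]) (auto intro!: ofb_meas borel_measurable_times_ennreal)
    also have "\<dots> \<le> \<beta> m"
      unfolding \<beta>_def
    proof (rule nn_integral_mono)
      fix \<omega>
      show "of_bool (nocc S (snth \<omega>) (m + N)) + of_bool (nocc S (snth \<omega>) m) * of_bool (\<forall>t<length S. \<omega> !! (m + t) = S ! t) \<le> (of_bool (nocc S (snth \<omega>) m) :: ennreal)"
        using nocc_step[of S "snth \<omega>" m] unfolding N_def by (cases "nocc S (snth \<omega>) (m + length S)") auto
    qed
    finally show ?thesis .
  qed
  have rstep: "r (m + N) \<le> (1 - P) * r m" for m
  proof -
    have e: "ennreal (r (m + N) + r m * P) = \<beta> (m + N) + \<beta> m * P"
      using r0 P0 by (simp add: \<beta>r ennreal_mult ennreal_plus)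
    have "ennreal (r (m + N) + r m * P) \<le> ennreal (r m)"
      using step[of m] unfolding e by (simp add: \<beta>r)
    then have "r (m + N) + r m * P \<le> r m" using r0 by (simp add: ennreal_le_iff)
    then show ?thesis by (simp add: algebra_simps)
  qed
  have rpow: "r (j * N) \<le> (1 - P) ^ j" for j
  proof (induction j)
    case 0
    have "r 0 \<le> enn2real 1" unfolding r_def by (rule enn2real_mono[OF \<beta>le]) simp
    then show ?case by simp
  next
    case (Suc j)
    have "r (Suc j * N) = r (j * N + N)" by (simp add: add.commute)
    also have "\<dots> \<le> (1 - P) * r (j * N)" by (rule rstep)
    also have "\<dots> \<le> (1 - P) * (1 - P) ^ j" using Suc P1 by (intro mult_left_mono) auto
    finally show ?case by simp
  qed
  define B where "B = {\<omega>. \<not> (\<exists>j. occ S (snth \<omega>) j)}"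
  have Bm: "B \<in> sets (coin_space p)"
  proof -
    have "{\<omega> \<in> space (stream_space (count_space UNIV)). \<not> (\<exists>j. occ S (snth \<omega>) j)} \<in> sets (stream_space (count_space UNIV))"
      by measurable
    then show ?thesis unfolding B_def using sets_Om by (simp add: space_stream_space)
  qed
  interpret Om: prob_space "coin_space p" by (rule prob_Om)
  have eB: "Om.prob B \<le> (1 - P) ^ j" for j
  proof -
    have "emeasure (coin_space p) B = (\<integral>\<^sup>+\<omega>. indicator B \<omega> \<partial>coin_space p)"
      using Bm by simp
    also have "\<dots> \<le> \<beta> (j * N)"
      unfolding \<beta>_def by (rule nn_integral_mono) (auto simp: B_def nocc_def indicator_def)
    finally have "ennreal (Om.prob B) \<le> ennreal (r (j * N))" by (simp add: \<beta>r Om.emeasure_eq_measure)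
    then have "Om.prob B \<le> r (j * N)" using r0 by (simp add: ennreal_le_iff)
    then show ?thesis using rpow[of j] by simp
  qed
  have "Om.prob B = 0"
  proof (rule ccontr)
    assume "Om.prob B \<noteq> 0"
    then have "0 < Om.prob B" using Om.prob_space by (simp add: less_le)
    moreover have "1 - P < 1" using P0 by simp
    ultimately obtain j where "(1 - P) ^ j < Om.prob B" using real_arch_pow_inv by blast
    then show False using eB[of j] by simp
  qed
  then have "emeasure (coin_space p) B = 0" by (simp add: Om.emeasure_eq_measure)
  then show ?thesis
    by (subst AE_iff_measurable[OF Bm]) (auto simp: B_def)
qed

end

lemma focc_unique:
  assumes a: "focc S x i" and b: "focc S x j"
  shows "i = j"
proof (rule ccontr)
  assume "i \<noteq> j"
  then have "i < j \<or> j < i" by arith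
  then show False using a b unfolding focc_def by auto
qed

lemma sum_ofb_unique:
  fixes Q :: "'a \<Rightarrow> bool"
  assumes "finite I" "\<And>i j. i \<in> I \<Longrightarrow> j \<in> I \<Longrightarrow> Q i \<Longrightarrow> Q j \<Longrightarrow> i = j"
  shows "(\<Sum>i\<in>I. of_bool (Q i) :: ennreal) = of_bool (\<exists>i\<in>I. Q i)"
proof (cases "\<exists>i\<in>I. Q i")
  case True
  then obtain i0 where i0: "i0 \<in> I" "Q i0" by blast
  have "(\<Sum>i\<in>I. of_bool (Q i) :: ennreal) = of_bool (Q i0) + (\<Sum>i\<in>I - {i0}. of_bool (Q i))"
    using assms(1) i0(1) by (rule sum.remove)
  also have "(\<Sum>i\<in>I - {i0}. of_bool (Q i) :: ennreal) = 0"
    using assms(2)[OF i0(1)] i0(2) by (intro sum.neutral) auto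
  finally show ?thesis using True i0 by simp
qed simp

lemma nth_HT: "t < k + l \<Longrightarrow> (replicate k True @ replicate l False) ! t = (t < k)"
  by (simp add: nth_append)

lemma focc_NO:
  fixes k l :: nat
  defines "S \<equiv> replicate k True @ replicate l False"
  assumes k: "k \<ge> 1" and l: "l \<ge> 1"
  shows "focc S x (m + length S) \<longleftrightarrow> nocc S x m \<and> (\<forall>t<length S. x (m + t) = S ! t)"
proof
  assume f: "focc S x (m + length S)"
  have lenS: "length S = k + l" by (simp add: S_def)
  have o: "occ S x (m + length S)" and no: "\<forall>i<m + length S. \<not> occ S x i"
    using f by (auto simp: focc_def)
  have "nocc S x m" unfolding nocc_def
  proof (intro allI impI)
    fix i assume "i \<le> m"
    then have "i < m + length S" using lenS k by simp
    then show "\<not> occ S x i" using no by simp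
  qed
  moreover have "\<forall>t<length S. x (m + t) = S ! t" using o by (simp add: occ_def)
  ultimately show "nocc S x m \<and> (\<forall>t<length S. x (m + t) = S ! t)" by simp
next
  assume a: "nocc S x m \<and> (\<forall>t<length S. x (m + t) = S ! t)"
  have lenS: "length S = k + l" by (simp add: S_def)
  have Sn: "\<And>t. t < k + l \<Longrightarrow> S ! t = (t < k)" by (simp add: S_def nth_HT)
  have C: "\<And>u. u < k + l \<Longrightarrow> x (m + u) = (u < k)" using a lenS Sn by auto
  have "\<not> occ S x i" if i: "i < m + (k + l)" for i
  proof (cases "i \<le> m")
    case True then show ?thesis using a by (simp add: nocc_def)
  next
    case False
    show ?thesis
    proof
      assume o: "occ S x i"
      then have kl: "k + l \<le> i" and O: "\<And>t. t < k + l \<Longrightarrow> x (i - (k + l) + t) = (t < k)"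
        using lenS Sn by (auto simp: occ_def)
      define d where "d = i - m"
      have d0: "0 < d" "d < k + l" using False i by (auto simp: d_def)
      have "x m = True" using C[of 0] k by simp
      moreover have "x m = (k + l - d < k)" using O[of "k + l - d"] d0 kl False by (simp add: d_def)
      ultimately have dl: "d > l" by simp
      have "x (m + (d - l)) = (d - l < k)" using C[of "d - l"] d0 by simp
      moreover have "x (m + (d - l)) = False"
        using O[of k] l kl dl d0 False by (simp add: d_def algebra_simps)
      ultimately have "d - l \<ge> k" by simp
      then show False using d0 dl by linarith
    qed
  qed
  moreover have "occ S x (m + length S)" using a by (simp add: occ_def)
  ultimately show "focc S x (m + length S)" using lenS by (simp add: focc_def)
qed

lemma focc_H:
  fixes k :: nat
  defines "S \<equiv> replicate k True"
  assumes k: "k \<ge> 1"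
  shows "(nocc S x m \<and> (\<forall>t<k. x (m + t) = S ! t)) \<longleftrightarrow>
         (\<exists>i\<in>{1..k}. focc S x (m + i) \<and> (\<forall>t<k - i. x (m + i + t) = replicate (k - i) True ! t))"
proof
  assume a: "nocc S x m \<and> (\<forall>t<k. x (m + t) = S ! t)"
  have C: "\<And>t. t < k \<Longrightarrow> x (m + t)" using a by (simp add: S_def)
  have o: "occ S x (m + k)" using C by (simp add: occ_def S_def)
  define Y where "Y = (LEAST j. occ S x j)"
  have ex: "\<exists>j. occ S x j" using o by blast
  have fY: "focc S x Y" using good_focc[OF ex] by (simp add: Y_def)
  have Yle: "Y \<le> m + k" using o by (simp add: Y_def Least_le)
  have Ygt: "m < Y" using good_nocc[OF ex, of m] a by (simp add: Y_def)
  show "\<exists>i\<in>{1..k}. focc S x (m + i) \<and> (\<forall>t<k - i. x (m + i + t) = replicate (k - i) True ! t)"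
  proof (intro bexI conjI)
    show "focc S x (m + (Y - m))" using fY Ygt by simp
    show "\<forall>t<k - (Y - m). x (m + (Y - m) + t) = replicate (k - (Y - m)) True ! t"
    proof (intro allI impI)
      fix t assume t: "t < k - (Y - m)"
      have "x (m + (t + (Y - m)))" using C[of "t + (Y - m)"] t by simp
      then show "x (m + (Y - m) + t) = replicate (k - (Y - m)) True ! t"
        using t Ygt by (simp add: algebra_simps)
    qed
    show "Y - m \<in> {1..k}" using Ygt Yle by auto
  qed
next
  assume "\<exists>i\<in>{1..k}. focc S x (m + i) \<and> (\<forall>t<k - i. x (m + i + t) = replicate (k - i) True ! t)"
  then obtain i where i: "i \<in> {1..k}" and f: "focc S x (m + i)" and D: "\<forall>t<k - i. x (m + i + t)" by auto
  have o: "occ S x (m + i)" and no: "\<forall>j<m + i. \<not> occ S x j" using f by (auto simp: focc_def)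
  have ki: "k \<le> m + i" and O: "\<And>t. t < k \<Longrightarrow> x (m + i - k + t)" using o by (auto simp: occ_def S_def)
  have "nocc S x m" using no i by (auto simp: nocc_def)
  moreover have "x (m + t)" if t: "t < k" for t
  proof (cases "t < i")
    case True
    then show ?thesis using O[of "k - i + t"] ki t i by (simp add: algebra_simps)
  next
    case False
    then show ?thesis using D[rule_format, of "t - i"] t by (simp add: algebra_simps)
  qed
  ultimately show "nocc S x m \<and> (\<forall>t<k. x (m + t) = S ! t)" by (simp add: S_def)
qed


context coin begin

lemma nocc_meas: "(\<lambda>\<omega>. of_bool (nocc S (snth \<omega>) m) :: ennreal) \<in> borel_measurable (coin_space p)"
  by (rule ofb_meas) (rule nocc_pred)

lemma focc_meas: "(\<lambda>\<omega>. of_bool (focc S (snth \<omega>) m) :: ennreal) \<in> borel_measurable (coin_space p)"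
  by (rule ofb_meas) (rule focc_pred)

lemma cmeas: "h \<in> borel_measurable (coin_space p) \<Longrightarrow> (\<lambda>\<omega>. c * h \<omega> :: ennreal) \<in> borel_measurable (coin_space p)"
  by (rule borel_measurable_times_ennreal) simp_all

lemma R2:
  assumes S: "S \<noteq> []"
  shows "(\<integral>\<^sup>+\<omega>. (\<Sum>m<waiting_time S \<omega>. g m) \<partial>coin_space p)
       = (\<Sum>m. g m * (\<integral>\<^sup>+\<omega>. of_bool (nocc S (snth \<omega>) m) \<partial>coin_space p))"
proof -
  have "(\<integral>\<^sup>+\<omega>. (\<Sum>m<waiting_time S \<omega>. g m) \<partial>coin_space p)
      = (\<integral>\<^sup>+\<omega>. (\<Sum>m. g m * of_bool (nocc S (snth \<omega>) m)) \<partial>coin_space p)"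
  proof (rule nn_integral_cong_AE)
    show "AE \<omega> in coin_space p. (\<Sum>m<waiting_time S \<omega>. g m) = (\<Sum>m. g m * of_bool (nocc S (snth \<omega>) m))"
      using AE_good[OF S]
    proof eventually_elim
      case (elim \<omega>)
      have nn: "nocc S (snth \<omega>) m \<longleftrightarrow> m < waiting_time S \<omega>" for m
        unfolding wt_eq by (rule good_nocc[OF elim])
      have "(\<Sum>m. g m * of_bool (nocc S (snth \<omega>) m)) = (\<Sum>m<waiting_time S \<omega>. g m * of_bool (nocc S (snth \<omega>) m))"
        by (rule suminf_finite) (simp_all add: nn)
      also have "\<dots> = (\<Sum>m<waiting_time S \<omega>. g m)"
        by (rule sum.cong) (simp_all add: nn)
      finally show ?case by simp
    qed
  qed
  also have "\<dots> = (\<Sum>m. (\<integral>\<^sup>+\<omega>. g m * of_bool (nocc S (snth \<omega>) m) \<partial>coin_space p))"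
    by (rule nn_integral_suminf) (rule cmeas[OF nocc_meas])
  also have "\<dots> = (\<Sum>m. g m * (\<integral>\<^sup>+\<omega>. of_bool (nocc S (snth \<omega>) m) \<partial>coin_space p))"
    by (simp only: nn_integral_cmult[OF nocc_meas])
  finally show ?thesis .
qed

lemma R3:
  assumes S: "S \<noteq> []" and i: "i \<le> length S"
  shows "(\<integral>\<^sup>+\<omega>. f (waiting_time S \<omega>) \<partial>coin_space p)
       = (\<Sum>m. f (m + i) * (\<integral>\<^sup>+\<omega>. of_bool (focc S (snth \<omega>) (m + i)) \<partial>coin_space p))"
proof -
  have "(\<integral>\<^sup>+\<omega>. f (waiting_time S \<omega>) \<partial>coin_space p)
      = (\<integral>\<^sup>+\<omega>. (\<Sum>m. f (m + i) * of_bool (focc S (snth \<omega>) (m + i))) \<partial>coin_space p)"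
  proof (rule nn_integral_cong_AE)
    show "AE \<omega> in coin_space p. f (waiting_time S \<omega>) = (\<Sum>m. f (m + i) * of_bool (focc S (snth \<omega>) (m + i)))"
      using AE_good[OF S]
    proof eventually_elim
      case (elim \<omega>)
      define Y where "Y = waiting_time S \<omega>"
      have Yge: "i \<le> Y" using good_ge[OF elim] i by (simp add: Y_def wt_eq)
      have fo: "focc S (snth \<omega>) j \<longleftrightarrow> j = Y" for j
        using good_focc[OF elim] by (simp add: Y_def wt_eq)
      have "(\<Sum>m. f (m + i) * of_bool (focc S (snth \<omega>) (m + i))) = (\<Sum>m\<in>{Y - i}. f (m + i) * of_bool (focc S (snth \<omega>) (m + i)))"
      proof (rule suminf_finite)
        fix n assume "n \<notin> {Y - i}"
        then have "n + i \<noteq> Y" using Yge by auto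
        then show "f (n + i) * of_bool (focc S (snth \<omega>) (n + i)) = 0" by (simp add: fo)
      qed simp
      also have "\<dots> = f (Y - i + i) * of_bool (focc S (snth \<omega>) (Y - i + i))" by simp
      also have "Y - i + i = Y" using Yge by simp
      also have "f Y * of_bool (focc S (snth \<omega>) Y) = f Y" by (simp add: fo)
      finally show ?case by (simp add: Y_def)
    qed
  qed
  also have "\<dots> = (\<Sum>m. (\<integral>\<^sup>+\<omega>. f (m + i) * of_bool (focc S (snth \<omega>) (m + i)) \<partial>coin_space p))"
    by (rule nn_integral_suminf) (rule cmeas[OF focc_meas])
  also have "\<dots> = (\<Sum>m. f (m + i) * (\<integral>\<^sup>+\<omega>. of_bool (focc S (snth \<omega>) (m + i)) \<partial>coin_space p))"
    by (simp only: nn_integral_cmult[OF focc_meas])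
  finally show ?thesis .
qed

lemma rel_NO:
  fixes k l :: nat
  defines "S \<equiv> replicate k True @ replicate l False"
  assumes k: "k \<ge> 1" and l: "l \<ge> 1"
  shows "(\<integral>\<^sup>+\<omega>. of_bool (focc S (snth \<omega>) (m + length S)) \<partial>coin_space p)
       = (\<integral>\<^sup>+\<omega>. of_bool (nocc S (snth \<omega>) m) \<partial>coin_space p) * ennreal (p ^ k * (1 - p) ^ l)"
proof -
  have "(\<integral>\<^sup>+\<omega>. of_bool (focc S (snth \<omega>) (m + length S)) \<partial>coin_space p)
      = (\<integral>\<^sup>+\<omega>. of_bool (nocc S (snth \<omega>) m) * of_bool (\<forall>t<length S. \<omega> !! (m + t) = S ! t) \<partial>coin_space p)"
    using focc_NO[OF k l] unfolding S_def by (simp add: of_bool_conj)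
  also have "\<dots> = (\<integral>\<^sup>+\<omega>. of_bool (nocc S (snth \<omega>) m) \<partial>coin_space p) * ennreal (\<Prod>x\<leftarrow>S. if x then p else 1 - p)"
    by (rule L12_nocc)
  also have "(\<Prod>x\<leftarrow>S. if x then p else 1 - p) = p ^ k * (1 - p) ^ l"
    by (simp add: S_def)
  finally show ?thesis .
qed

lemma rel_H:
  fixes k :: nat
  defines "S \<equiv> replicate k True"
  assumes k: "k \<ge> 1"
  shows "(\<integral>\<^sup>+\<omega>. of_bool (nocc S (snth \<omega>) m) \<partial>coin_space p) * ennreal (p ^ k)
       = (\<Sum>i\<in>{1..k}. (\<integral>\<^sup>+\<omega>. of_bool (focc S (snth \<omega>) (m + i)) \<partial>coin_space p) * ennreal (p ^ (k - i)))"
proof -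
  have "(\<integral>\<^sup>+\<omega>. of_bool (nocc S (snth \<omega>) m) \<partial>coin_space p) * ennreal (p ^ k)
      = (\<integral>\<^sup>+\<omega>. of_bool (nocc S (snth \<omega>) m) * of_bool (\<forall>t<length S. \<omega> !! (m + t) = S ! t) \<partial>coin_space p)"
    using L12_nocc[of S m S] by (simp add: S_def)
  also have "\<dots> = (\<integral>\<^sup>+\<omega>. (\<Sum>i\<in>{1..k}. of_bool (focc S (snth \<omega>) (m + i)) *
        of_bool (\<forall>t<length (replicate (k - i) True). \<omega> !! (m + i + t) = replicate (k - i) True ! t)) \<partial>coin_space p)"
  proof (rule nn_integral_cong)
    fix \<omega>
    define D where "D = (\<lambda>i. \<forall>t<length (replicate (k - i) True). \<omega> !! (m + i + t) = replicate (k - i) True ! t)"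
    have "(of_bool (nocc S (snth \<omega>) m) * of_bool (\<forall>t<length S. \<omega> !! (m + t) = S ! t) :: ennreal)
        = of_bool (nocc S (snth \<omega>) m \<and> (\<forall>t<length S. \<omega> !! (m + t) = S ! t))"
      by (rule of_bool_conj[symmetric])
    also have "(nocc S (snth \<omega>) m \<and> (\<forall>t<length S. \<omega> !! (m + t) = S ! t))
        = (\<exists>i\<in>{1..k}. focc S (snth \<omega>) (m + i) \<and> D i)"
      using focc_H[OF k, of "snth \<omega>" m] unfolding D_def S_def length_replicate by simp
    also have "(of_bool (\<exists>i\<in>{1..k}. focc S (snth \<omega>) (m + i) \<and> D i) :: ennreal)
        = (\<Sum>i\<in>{1..k}. of_bool (focc S (snth \<omega>) (m + i) \<and> D i))"
      by (rule sum_ofb_unique[symmetric]) (auto dest: focc_unique)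
    also have "\<dots> = (\<Sum>i\<in>{1..k}. of_bool (focc S (snth \<omega>) (m + i)) * of_bool (D i))"
      by (simp only: of_bool_conj)
    finally show "of_bool (nocc S (snth \<omega>) m) * of_bool (\<forall>t<length S. \<omega> !! (m + t) = S ! t) =
        (\<Sum>i\<in>{1..k}. of_bool (focc S (snth \<omega>) (m + i)) *
        of_bool (\<forall>t<length (replicate (k - i) True). \<omega> !! (m + i + t) = replicate (k - i) True ! t) :: ennreal)"
      unfolding D_def .
  qed
  also have "\<dots> = (\<Sum>i\<in>{1..k}. (\<integral>\<^sup>+\<omega>. of_bool (focc S (snth \<omega>) (m + i)) *
        of_bool (\<forall>t<length (replicate (k - i) True). \<omega> !! (m + i + t) = replicate (k - i) True ! t) \<partial>coin_space p))"
    by (rule nn_integral_sum) (intro borel_measurable_times_ennreal focc_meas ofb_meas, measurable)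
  also have "\<dots> = (\<Sum>i\<in>{1..k}. (\<integral>\<^sup>+\<omega>. of_bool (focc S (snth \<omega>) (m + i)) \<partial>coin_space p) * ennreal (p ^ (k - i)))"
  proof (rule sum.cong[OF refl])
    fix i
    show "(\<integral>\<^sup>+\<omega>. of_bool (focc S (snth \<omega>) (m + i)) *
        of_bool (\<forall>t<length (replicate (k - i) True). \<omega> !! (m + i + t) = replicate (k - i) True ! t) \<partial>coin_space p)
      = (\<integral>\<^sup>+\<omega>. of_bool (focc S (snth \<omega>) (m + i)) \<partial>coin_space p) * ennreal (p ^ (k - i))"
      using L12_focc[of S "m + i" "replicate (k - i) True"] by simp
  qed
  finally show ?thesis .
qed

end

definition conv :: "(nat \<Rightarrow> real) \<Rightarrow> real \<Rightarrow> nat \<Rightarrow> real" where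
  "conv x c n = (\<Sum>j\<le>n. real (n choose j) * x j * c ^ (n - j))"

lemma egf_exp_nth: "fps_nth (egf x * fps_exp c) n = conv x c n / fact n"
  by (simp add: egf_exp[symmetric] egf_mult conv_def)

lemma binom_diff: "(x + 1) ^ n - x ^ n = (\<Sum>j<n. real (n choose j) * x ^ j)" for x :: real
proof -
  have "(x + 1) ^ n = (\<Sum>j\<le>n. real (n choose j) * x ^ j)"
    by (simp add: binomial_ring)
  also have "\<dots> = (\<Sum>j<n. real (n choose j) * x ^ j) + x ^ n"
    by (simp add: lessThan_Suc_atMost[symmetric])
  finally show ?thesis by simp
qed

lemma pow_superadd: "0 \<le> a \<Longrightarrow> 0 \<le> b \<Longrightarrow> a ^ Suc n + b ^ Suc n \<le> (a + b) ^ Suc n" for a b :: real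
proof (induction n)
  case 0 then show ?case by simp
next
  case (Suc n)
  have "a ^ Suc (Suc n) + b ^ Suc (Suc n) \<le> (a + b) * (a ^ Suc n + b ^ Suc n)"
    using Suc.prems by (simp add: algebra_simps)
  also have "\<dots> \<le> (a + b) * (a + b) ^ Suc n"
    using Suc.IH Suc.prems by (intro mult_left_mono) auto
  finally show ?case by simp
qed

lemma pow_mono_diff: "0 \<le> x \<Longrightarrow> x ^ n \<le> (x + 1) ^ n" for x :: real
  by (rule power_mono) auto

lemma telescope_ennreal:
  fixes c :: real assumes c: "0 \<le> c"
  shows "(\<Sum>m<y. ennreal ((real m + c + 1) ^ n - (real m + c) ^ n)) = ennreal ((real y + c) ^ n - c ^ n)"
proof -
  have "(\<Sum>m<y. ennreal ((real m + c + 1) ^ n - (real m + c) ^ n)) = ennreal (\<Sum>m<y. (real m + c + 1) ^ n - (real m + c) ^ n)"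
    using c by (intro sum_ennreal) (simp add: pow_mono_diff)
  also have "(\<Sum>m<y. (real m + c + 1) ^ n - (real m + c) ^ n) = (\<Sum>m<y. (\<lambda>m. (real m + c) ^ n) (Suc m) - (\<lambda>m. (real m + c) ^ n) m)"
    by (simp add: algebra_simps)
  also have "\<dots> = (real y + c) ^ n - c ^ n"
    by (subst sum_lessThan_telescope) simp
  finally show ?thesis .
qed

context coin begin

definition mu :: "bool list \<Rightarrow> nat \<Rightarrow> ennreal" where
  "mu S n = (\<integral>\<^sup>+\<omega>. ennreal (real (waiting_time S \<omega>) ^ n) \<partial>coin_space p)"

definition Mc :: "bool list \<Rightarrow> real \<Rightarrow> nat \<Rightarrow> ennreal" where
  "Mc S c n = (\<integral>\<^sup>+\<omega>. ennreal ((real (waiting_time S \<omega>) + c) ^ n) \<partial>coin_space p)"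

lemma Ymeas_pow: "(\<lambda>\<omega>. ennreal (h (waiting_time S \<omega>))) \<in> borel_measurable (coin_space p)"
  by (rule fY_meas[of "\<lambda>y. ennreal (h y)"])

lemma mu0: "mu S 0 = 1"
  by (simp add: mu_def emeasure_Om_UNIV)

lemma Mc_expand:
  assumes c: "0 \<le> c"
  shows "Mc S c n = (\<Sum>j\<le>n. ennreal (real (n choose j) * c ^ (n - j)) * mu S j)"
proof -
  have "Mc S c n = (\<integral>\<^sup>+\<omega>. (\<Sum>j\<le>n. ennreal (real (n choose j) * c ^ (n - j)) * ennreal (real (waiting_time S \<omega>) ^ j)) \<partial>coin_space p)"
    unfolding Mc_def
  proof (rule nn_integral_cong)
    fix \<omega>
    have "(real (waiting_time S \<omega>) + c) ^ n = (\<Sum>j\<le>n. real (n choose j) * c ^ (n - j) * real (waiting_time S \<omega>) ^ j)"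
      by (simp add: binomial_ring mult_ac)
    then show "ennreal ((real (waiting_time S \<omega>) + c) ^ n) = (\<Sum>j\<le>n. ennreal (real (n choose j) * c ^ (n - j)) * ennreal (real (waiting_time S \<omega>) ^ j))"
      using c by (simp add: ennreal_mult[symmetric] sum_ennreal)
  qed
  also have "\<dots> = (\<Sum>j\<le>n. (\<integral>\<^sup>+\<omega>. ennreal (real (n choose j) * c ^ (n - j)) * ennreal (real (waiting_time S \<omega>) ^ j) \<partial>coin_space p))"
    by (rule nn_integral_sum) (rule cmeas[OF Ymeas_pow])
  also have "\<dots> = (\<Sum>j\<le>n. ennreal (real (n choose j) * c ^ (n - j)) * mu S j)"
    unfolding mu_def by (rule sum.cong[OF refl], rule nn_integral_cmult, rule Ymeas_pow)
  finally show ?thesis .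
qed

lemma Mc_finite:
  assumes c: "0 \<le> c" and fin: "\<And>j. j \<le> n \<Longrightarrow> mu S j < top"
  shows "Mc S c n < top"
  unfolding Mc_expand[OF c] using fin by (simp add: ennreal_mult_less_top)

lemma Mc_real:
  assumes c: "0 \<le> c" and fin: "\<And>j. j \<le> n \<Longrightarrow> mu S j < top"
  shows "Mc S c n = ennreal (conv (\<lambda>j. enn2real (mu S j)) c n)"
proof -
  have "Mc S c n = (\<Sum>j\<le>n. ennreal (real (n choose j) * c ^ (n - j)) * ennreal (enn2real (mu S j)))"
    unfolding Mc_expand[OF c] using fin by (intro sum.cong) (auto simp: ennreal_enn2real)
  also have "\<dots> = ennreal (conv (\<lambda>j. enn2real (mu S j)) c n)"
    unfolding conv_def using c by (simp add: ennreal_mult[symmetric] sum_ennreal mult_ac)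
  finally show ?thesis .
qed

lemma diff_split:
  assumes c: "0 \<le> c"
  shows "(\<integral>\<^sup>+\<omega>. ennreal ((real (waiting_time S \<omega>) + c + 1) ^ n - (real (waiting_time S \<omega>) + c) ^ n) \<partial>coin_space p) + Mc S c n
       = Mc S (c + 1) n"
proof -
  have "(\<integral>\<^sup>+\<omega>. ennreal ((real (waiting_time S \<omega>) + c + 1) ^ n - (real (waiting_time S \<omega>) + c) ^ n) \<partial>coin_space p) + Mc S c n
      = (\<integral>\<^sup>+\<omega>. ennreal ((real (waiting_time S \<omega>) + c + 1) ^ n - (real (waiting_time S \<omega>) + c) ^ n) + ennreal ((real (waiting_time S \<omega>) + c) ^ n) \<partial>coin_space p)"
    unfolding Mc_def by (rule nn_integral_add[symmetric]) (rule Ymeas_pow)+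
  also have "\<dots> = Mc S (c + 1) n"
    unfolding Mc_def
  proof (rule nn_integral_cong)
    fix \<omega>
    have "(real (waiting_time S \<omega>) + c) ^ n \<le> (real (waiting_time S \<omega>) + c + 1) ^ n"
      using c by (intro pow_mono_diff) simp
    then show "ennreal ((real (waiting_time S \<omega>) + c + 1) ^ n - (real (waiting_time S \<omega>) + c) ^ n) + ennreal ((real (waiting_time S \<omega>) + c) ^ n)
        = ennreal ((real (waiting_time S \<omega>) + (c + 1)) ^ n)"
      using c by (simp add: ennreal_plus[symmetric] add.assoc del: ennreal_plus)
  qed
  finally show ?thesis .
qed

lemma diff_lower:
  assumes c: "0 \<le> c"
  shows "(\<integral>\<^sup>+\<omega>. ennreal ((real (waiting_time S \<omega>) + c + 1) ^ n - (real (waiting_time S \<omega>) + c) ^ n) \<partial>coin_space p)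
       = (\<Sum>j<n. ennreal (real (n choose j)) * Mc S c j)"
proof -
  have "(\<integral>\<^sup>+\<omega>. ennreal ((real (waiting_time S \<omega>) + c + 1) ^ n - (real (waiting_time S \<omega>) + c) ^ n) \<partial>coin_space p)
      = (\<integral>\<^sup>+\<omega>. (\<Sum>j<n. ennreal (real (n choose j)) * ennreal ((real (waiting_time S \<omega>) + c) ^ j)) \<partial>coin_space p)"
  proof (rule nn_integral_cong)
    fix \<omega>
    show "ennreal ((real (waiting_time S \<omega>) + c + 1) ^ n - (real (waiting_time S \<omega>) + c) ^ n)
        = (\<Sum>j<n. ennreal (real (n choose j)) * ennreal ((real (waiting_time S \<omega>) + c) ^ j))"
      using c by (simp add: binom_diff ennreal_mult[symmetric] sum_ennreal)
  qed
  also have "\<dots> = (\<Sum>j<n. (\<integral>\<^sup>+\<omega>. ennreal (real (n choose j)) * ennreal ((real (waiting_time S \<omega>) + c) ^ j) \<partial>coin_space p))"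
    by (rule nn_integral_sum) (rule cmeas[OF Ymeas_pow])
  also have "\<dots> = (\<Sum>j<n. ennreal (real (n choose j)) * Mc S c j)"
    unfolding Mc_def by (rule sum.cong[OF refl], rule nn_integral_cmult, rule Ymeas_pow)
  finally show ?thesis .
qed

lemma Mc0: "Mc S 0 n = mu S n"
  by (simp add: Mc_def mu_def)

end

context coin begin

lemma mu_pow_le:
  assumes c: "0 \<le> c"
  shows "mu S (Suc n) \<le> (\<integral>\<^sup>+\<omega>. ennreal ((real (waiting_time S \<omega>) + c) ^ Suc n - c ^ Suc n) \<partial>coin_space p)"
  unfolding mu_def
proof (rule nn_integral_mono)
  fix \<omega>
  have "real (waiting_time S \<omega>) ^ Suc n + c ^ Suc n \<le> (real (waiting_time S \<omega>) + c) ^ Suc n"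
    using c by (intro pow_superadd) auto
  then show "ennreal (real (waiting_time S \<omega>) ^ Suc n) \<le> ennreal ((real (waiting_time S \<omega>) + c) ^ Suc n - c ^ Suc n)"
    by (intro ennreal_leI) linarith
qed

lemma tail_split:
  assumes c: "0 \<le> c"
  shows "(\<integral>\<^sup>+\<omega>. ennreal ((real (waiting_time S \<omega>) + c) ^ n - c ^ n) \<partial>coin_space p) + ennreal (c ^ n) = Mc S c n"
proof -
  have "(\<integral>\<^sup>+\<omega>. ennreal ((real (waiting_time S \<omega>) + c) ^ n - c ^ n) \<partial>coin_space p) + ennreal (c ^ n)
      = (\<integral>\<^sup>+\<omega>. ennreal ((real (waiting_time S \<omega>) + c) ^ n - c ^ n) + ennreal (c ^ n) \<partial>coin_space p)"
  proof -
    have "(\<integral>\<^sup>+\<omega>. ennreal ((real (waiting_time S \<omega>) + c) ^ n - c ^ n) + ennreal (c ^ n) \<partial>coin_space p)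
      = (\<integral>\<^sup>+\<omega>. ennreal ((real (waiting_time S \<omega>) + c) ^ n - c ^ n) \<partial>coin_space p) + (\<integral>\<^sup>+\<omega>. ennreal (c ^ n) \<partial>coin_space p)"
      by (rule nn_integral_add) (rule Ymeas_pow, rule borel_measurable_const)
    then show ?thesis by (simp only: nn_const_Om)
  qed
  also have "\<dots> = Mc S c n"
    unfolding Mc_def
  proof (rule nn_integral_cong)
    fix \<omega>
    have "c ^ n \<le> (real (waiting_time S \<omega>) + c) ^ n" using c by (intro power_mono) auto
    moreover have "0 \<le> c ^ n" using c by simp
    ultimately have "ennreal ((real (waiting_time S \<omega>) + c) ^ n - c ^ n) + ennreal (c ^ n) = ennreal (((real (waiting_time S \<omega>) + c) ^ n - c ^ n) + c ^ n)"
      by (intro ennreal_plus[symmetric]) auto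
    then show "ennreal ((real (waiting_time S \<omega>) + c) ^ n - c ^ n) + ennreal (c ^ n) = ennreal ((real (waiting_time S \<omega>) + c) ^ n)"
      by simp
  qed
  finally show ?thesis .
qed

lemma ring_aux3: "a * b + m + a * c = m + a * (b + c)" for a b c m :: "'a::comm_semiring"
  by (simp add: algebra_simps)

lemma ring_aux4: "x * (c * e + 1 - f) = c * (x * e) + x - x * f" for x c e f :: "'a::comm_ring_1"
  by (simp add: algebra_simps)

theorem NO_main:
  fixes k l n :: nat
  assumes k: "k \<ge> 1" and l: "l \<ge> 1"
  defines "S \<equiv> replicate k True @ replicate l False"
  shows "mu S n = ennreal (psum (GN p k l) n)"
proof -
  define N where "N = k + l"
  define P where "P = p ^ k * (1 - p) ^ l"
  have P0: "0 < P" using p_pos p_lt1 by (simp add: P_def)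
  have lenS: "length S = N" by (simp add: S_def N_def)
  have Sne: "S \<noteq> []" using k by (simp add: S_def)
  define A where "A n = (\<integral>\<^sup>+\<omega>. ennreal ((real (waiting_time S \<omega>) + 0 + 1) ^ n - (real (waiting_time S \<omega>) + 0) ^ n) \<partial>coin_space p)" for n
  define B where "B n = (\<integral>\<^sup>+\<omega>. ennreal ((real (waiting_time S \<omega>) + real N) ^ n - real N ^ n) \<partial>coin_space p)" for n
  have AB: "A n = ennreal P * B n" for n
  proof -
    define f where "f y = ennreal ((real y + 0 + 1) ^ n - (real y + 0) ^ n)" for y
    have "A n = (\<integral>\<^sup>+\<omega>. f (waiting_time S \<omega>) \<partial>coin_space p)" by (simp add: A_def f_def)
    also have "\<dots> = (\<Sum>m. f (m + N) * (\<integral>\<^sup>+\<omega>. of_bool (focc S (snth \<omega>) (m + N)) \<partial>coin_space p))"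
      using R3[OF Sne, of N f] lenS by simp
    also have "\<dots> = (\<Sum>m. ennreal P * (f (m + N) * (\<integral>\<^sup>+\<omega>. of_bool (nocc S (snth \<omega>) m) \<partial>coin_space p)))"
      using rel_NO[OF k l, of m for m] lenS by (simp add: S_def P_def N_def mult_ac)
    also have "\<dots> = ennreal P * (\<Sum>m. f (m + N) * (\<integral>\<^sup>+\<omega>. of_bool (nocc S (snth \<omega>) m) \<partial>coin_space p))"
      by (rule ennreal_suminf_cmult)
    also have "(\<Sum>m. f (m + N) * (\<integral>\<^sup>+\<omega>. of_bool (nocc S (snth \<omega>) m) \<partial>coin_space p))
        = (\<integral>\<^sup>+\<omega>. (\<Sum>m<waiting_time S \<omega>. f (m + N)) \<partial>coin_space p)"
      by (rule R2[OF Sne, symmetric])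
    also have "\<dots> = B n"
      unfolding B_def
    proof (rule nn_integral_cong)
      fix \<omega>
      have "(\<Sum>m<waiting_time S \<omega>. f (m + N)) = (\<Sum>m<waiting_time S \<omega>. ennreal ((real m + real N + 1) ^ n - (real m + real N) ^ n))"
        by (simp add: f_def)
      also have "\<dots> = ennreal ((real (waiting_time S \<omega>) + real N) ^ n - real N ^ n)"
        by (rule telescope_ennreal) simp
      finally show "(\<Sum>m<waiting_time S \<omega>. f (m + N)) = ennreal ((real (waiting_time S \<omega>) + real N) ^ n - real N ^ n)" .
    qed
    finally show ?thesis .
  qed
  have Alow: "A n = (\<Sum>j<n. ennreal (real (n choose j)) * mu S j)" for n
    unfolding A_def using diff_lower[of 0 S n] by (simp add: Mc0)
  have fin: "mu S n < top" for n
  proof (induction n rule: less_induct)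
    case (less n)
    show ?case
    proof (cases n)
      case 0 then show ?thesis by (simp add: mu0)
    next
      case (Suc n')
      have "A n < top" unfolding Alow using less by (simp add: ennreal_mult_less_top)
      then have "ennreal P * B n < top" by (simp add: AB)
      then have "B n < top" using P0 by (auto simp: ennreal_mult_less_top)
      moreover have "mu S n \<le> B n" unfolding B_def Suc by (rule mu_pow_le) simp
      ultimately show ?thesis by (simp add: le_less_trans)
    qed
  qed
  define mr where "mr j = enn2real (mu S j)" for j
  have mr: "mu S j = ennreal (mr j)" for j using fin[of j] by (simp add: mr_def ennreal_enn2real)
  have mr_eq: "(\<lambda>j. enn2real (mu S j)) = mr" by (rule ext) (simp add: mr_def)
  have ident: "conv mr 1 n + P * real N ^ n = mr n + P * conv mr (real N) n" for n
  proof -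
    have h1: "Mc S 1 n = A n + mu S n"
      using diff_split[of 0 S n] by (simp add: A_def Mc0 add.commute)
    have h2: "Mc S (real N) n = B n + ennreal (real N ^ n)"
      using tail_split[of "real N" S n] by (simp add: B_def)
    have "Mc S 1 n + ennreal P * ennreal (real N ^ n) = ennreal P * B n + mu S n + ennreal P * ennreal (real N ^ n)"
      by (simp add: h1 AB)
    also have "\<dots> = mu S n + ennreal P * (B n + ennreal (real N ^ n))"
      by (rule ring_aux3)
    also have "\<dots> = mu S n + ennreal P * Mc S (real N) n" by (simp only: h2)
    finally have e1: "Mc S 1 n + ennreal P * ennreal (real N ^ n) = mu S n + ennreal P * Mc S (real N) n" .
    have m1: "Mc S 1 n = ennreal (conv mr 1 n)"
      using Mc_real[of 1 n S] fin by (simp add: mr_eq)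
    have mN: "Mc S (real N) n = ennreal (conv mr (real N) n)"
      using Mc_real[of "real N" n S] fin by (simp add: mr_eq)
    have mr0: "0 \<le> mr j" for j by (simp add: mr_def)
    have c1: "0 \<le> conv mr 1 n" and cN: "0 \<le> conv mr (real N) n"
      unfolding conv_def using mr0 by (auto intro!: sum_nonneg)
    have "ennreal (conv mr 1 n + P * real N ^ n) = ennreal (conv mr 1 n) + ennreal P * ennreal (real N ^ n)"
      using c1 P0 by (simp add: ennreal_mult ennreal_plus)
    also have "\<dots> = ennreal (mr n) + ennreal P * ennreal (conv mr (real N) n)"
      using e1 by (simp only: m1 mN mr)
    also have "\<dots> = ennreal (mr n + P * conv mr (real N) n)"
      using cN P0 mr0[of n] by (simp add: ennreal_mult ennreal_plus)
    finally have "ennreal (conv mr 1 n + P * real N ^ n) = ennreal (mr n + P * conv mr (real N) n)" .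
    moreover have "0 \<le> conv mr 1 n + P * real N ^ n" using c1 P0 by simp
    moreover have "0 \<le> mr n + P * conv mr (real N) n" using cN P0 mr0[of n] by simp
    ultimately show ?thesis by (simp add: ennreal_inj)
  qed
  have E: "egf mr * (fps_const P * fps_exp (real N) + 1 - fps_exp 1) = fps_const P * fps_exp (real N)"
  proof (rule fps_ext)
    fix n
    have "egf mr * (fps_const P * fps_exp (real N) + 1 - fps_exp 1)
        = fps_const P * (egf mr * fps_exp (real N)) + egf mr - egf mr * fps_exp 1"
      by (rule ring_aux4)
    then have "fps_nth (egf mr * (fps_const P * fps_exp (real N) + 1 - fps_exp 1)) n
        = P * (conv mr (real N) n / fact n) + mr n / fact n - conv mr 1 n / fact n"
      by (simp only: fps_add_nth fps_sub_nth fps_mult_left_const_nth egf_exp_nth egf_nth)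
    also have "\<dots> = (P * conv mr (real N) n + mr n - conv mr 1 n) / fact n"
      by (simp add: add_divide_distrib diff_divide_distrib)
    also have "P * conv mr (real N) n + mr n - conv mr 1 n = P * real N ^ n"
      using ident[of n] by linarith
    finally show "fps_nth (egf mr * (fps_const P * fps_exp (real N) + 1 - fps_exp 1)) n
        = fps_nth (fps_const P * fps_exp (real N)) n" by simp
  qed
  have F: "egf (psum (GN p k l)) * (fps_const P * fps_exp (real N) + 1 - fps_exp 1) = fps_const P * fps_exp (real N)"
  proof -
    have Pne: "P \<noteq> 0" using P0 by simp
    from F_N[OF Pne[unfolded P_def]] k show ?thesis by (simp add: P_def N_def)
  qed
  have "egf mr = egf (psum (GN p k l))"
    by (rule fps_cancel[OF E F]) (use P0 in simp)
  then have "mr n = psum (GN p k l) n" by (rule egf_eqD)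
  then show ?thesis by (simp add: mr)
qed

end

context coin begin

lemma ennreal_lin:
  assumes "0 \<le> a" "0 \<le> x" "\<And>i. i \<in> I \<Longrightarrow> 0 \<le> b i" "\<And>i. i \<in> I \<Longrightarrow> 0 \<le> y i"
  shows "ennreal a * ennreal x + (\<Sum>i\<in>I. ennreal (b i) * ennreal (y i)) = ennreal (a * x + (\<Sum>i\<in>I. b i * y i))"
proof -
  have s: "(\<Sum>i\<in>I. ennreal (b i) * ennreal (y i)) = (\<Sum>i\<in>I. ennreal (b i * y i))"
    using assms by (intro sum.cong) (auto simp: ennreal_mult)
  also have "\<dots> = ennreal (\<Sum>i\<in>I. b i * y i)"
    using assms by (intro sum_ennreal) auto
  finally have "ennreal a * ennreal x + (\<Sum>i\<in>I. ennreal (b i) * ennreal (y i)) = ennreal (a * x) + ennreal (\<Sum>i\<in>I. b i * y i)"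
    using assms by (simp add: ennreal_mult)
  also have "\<dots> = ennreal (a * x + (\<Sum>i\<in>I. b i * y i))"
    using assms by (intro ennreal_plus[symmetric]) (auto intro!: sum_nonneg)
  finally show ?thesis .
qed

lemma ring_aux5: "a * (g + kk) + s = d + a * kk + s" if "a * g = d" for a g kk s d :: "'a::comm_semiring"
  using that by (simp add: algebra_simps)

theorem H_main:
  fixes k n :: nat
  assumes k: "k \<ge> 1"
  defines "S \<equiv> replicate k True"
  shows "mu S n = ennreal (psum (GH p k) n)"
proof -
  have lenS: "length S = k" by (simp add: S_def)
  have Sne: "S \<noteq> []" using k by (simp add: S_def)
  have pk0: "0 < p ^ j" for j using p_pos by simp
  have pk0': "0 \<le> p ^ j" for j using p_pos by simp
  define G where "G n = (\<integral>\<^sup>+\<omega>. ennreal ((real (waiting_time S \<omega>) + real k) ^ n - real k ^ n) \<partial>coin_space p)" for n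
  define D where "D i n = (\<integral>\<^sup>+\<omega>. ennreal ((real (waiting_time S \<omega>) + real (k - i) + 1) ^ n - (real (waiting_time S \<omega>) + real (k - i)) ^ n) \<partial>coin_space p)" for i n
  define \<alpha> where "\<alpha> j = (\<integral>\<^sup>+\<omega>. of_bool (focc S (snth \<omega>) j) \<partial>coin_space p)" for j
  define \<beta> where "\<beta> m = (\<integral>\<^sup>+\<omega>. of_bool (nocc S (snth \<omega>) m) \<partial>coin_space p)" for m
  have GD: "ennreal (p ^ k) * G n = (\<Sum>i\<in>{1..k}. ennreal (p ^ (k - i)) * D i n)" for n
  proof -
    define g where "g m = ennreal ((real m + real k + 1) ^ n - (real m + real k) ^ n)" for m
    have "G n = (\<integral>\<^sup>+\<omega>. (\<Sum>m<waiting_time S \<omega>. g m) \<partial>coin_space p)"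
      unfolding G_def g_def by (rule nn_integral_cong) (rule telescope_ennreal[symmetric], simp)
    also have "\<dots> = (\<Sum>m. g m * \<beta> m)"
      unfolding \<beta>_def by (rule R2[OF Sne])
    finally have "ennreal (p ^ k) * G n = (\<Sum>m. g m * (\<beta> m * ennreal (p ^ k)))"
      by (simp add: ennreal_suminf_cmult[symmetric] mult_ac)
    also have "\<dots> = (\<Sum>m. g m * (\<Sum>i\<in>{1..k}. \<alpha> (m + i) * ennreal (p ^ (k - i))))"
      using rel_H[OF k] unfolding \<alpha>_def \<beta>_def S_def by simp
    also have "\<dots> = (\<Sum>m. \<Sum>i\<in>{1..k}. ennreal (p ^ (k - i)) * (g m * \<alpha> (m + i)))"
      by (simp add: sum_distrib_left mult_ac)
    also have "\<dots> = (\<Sum>i\<in>{1..k}. \<Sum>m. ennreal (p ^ (k - i)) * (g m * \<alpha> (m + i)))"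
      by (rule suminf_sum) simp
    also have "\<dots> = (\<Sum>i\<in>{1..k}. ennreal (p ^ (k - i)) * D i n)"
    proof (rule sum.cong[OF refl])
      fix i assume i: "i \<in> {1..k}"
      define f where "f y = ennreal ((real y + real (k - i) + 1) ^ n - (real y + real (k - i)) ^ n)" for y
      have fg: "f (m + i) = g m" for m
      proof -
        have "real (m + i) + real (k - i) = real m + real k" using i by (simp add: of_nat_diff)
        then show ?thesis by (simp add: f_def g_def)
      qed
      have "D i n = (\<integral>\<^sup>+\<omega>. f (waiting_time S \<omega>) \<partial>coin_space p)" by (simp add: D_def f_def)
      also have "\<dots> = (\<Sum>m. f (m + i) * \<alpha> (m + i))"
        unfolding \<alpha>_def by (rule R3[OF Sne]) (use i lenS in simp)
      also have "\<dots> = (\<Sum>m. g m * \<alpha> (m + i))" by (simp add: fg)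
      finally show "(\<Sum>m. ennreal (p ^ (k - i)) * (g m * \<alpha> (m + i))) = ennreal (p ^ (k - i)) * D i n"
        by (simp add: ennreal_suminf_cmult)
    qed
    finally show ?thesis .
  qed
  have Dlow: "D i n = (\<Sum>j<n. ennreal (real (n choose j)) * Mc S (real (k - i)) j)" for i n
    unfolding D_def by (rule diff_lower) simp
  have fin: "mu S n < top" for n
  proof (induction n rule: less_induct)
    case (less n)
    show ?case
    proof (cases n)
      case 0 then show ?thesis by (simp add: mu0)
    next
      case (Suc n')
      have "D i n < top" for i
        unfolding Dlow using less by (auto simp: ennreal_mult_less_top intro!: Mc_finite)
      then have "ennreal (p ^ k) * G n < top" unfolding GD by (simp add: ennreal_mult_less_top)
      then have "G n < top" using pk0[of k] p_pos by (auto simp: ennreal_mult_less_top)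
      moreover have "mu S n \<le> G n" unfolding G_def Suc by (rule mu_pow_le) simp
      ultimately show ?thesis by (simp add: le_less_trans)
    qed
  qed
  define mr where "mr j = enn2real (mu S j)" for j
  have mr: "mu S j = ennreal (mr j)" for j using fin[of j] by (simp add: mr_def ennreal_enn2real)
  have mr_eq: "(\<lambda>j. enn2real (mu S j)) = mr" by (rule ext) (simp add: mr_def)
  have mr0: "0 \<le> mr j" for j by (simp add: mr_def)
  have cnn: "0 \<le> conv mr c n" if "0 \<le> c" for c n
    unfolding conv_def using mr0 that by (auto intro!: sum_nonneg)
  have Mcr: "Mc S c n = ennreal (conv mr c n)" if "0 \<le> c" for c n
    using Mc_real[OF that, of n S] fin by (simp add: mr_eq)
  have ident: "p ^ k * conv mr (real k) n + (\<Sum>i\<in>{1..k}. p ^ (k - i) * conv mr (real (k - i)) n)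
      = p ^ k * real k ^ n + (\<Sum>i\<in>{1..k}. p ^ (k - i) * conv mr (real (k - i) + 1) n)" for n
  proof -
    have h1: "Mc S (real k) n = G n + ennreal (real k ^ n)"
      using tail_split[of "real k" S n] by (simp add: G_def)
    have h2: "D i n + Mc S (real (k - i)) n = Mc S (real (k - i) + 1) n" for i
      unfolding D_def by (rule diff_split) simp
    have "ennreal (p ^ k) * Mc S (real k) n + (\<Sum>i\<in>{1..k}. ennreal (p ^ (k - i)) * Mc S (real (k - i)) n)
        = (\<Sum>i\<in>{1..k}. ennreal (p ^ (k - i)) * D i n) + ennreal (p ^ k) * ennreal (real k ^ n)
          + (\<Sum>i\<in>{1..k}. ennreal (p ^ (k - i)) * Mc S (real (k - i)) n)"
      unfolding h1 by (rule ring_aux5) (rule GD)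
    also have "\<dots> = ennreal (p ^ k) * ennreal (real k ^ n)
          + (\<Sum>i\<in>{1..k}. ennreal (p ^ (k - i)) * (D i n + Mc S (real (k - i)) n))"
      by (simp add: sum.distrib distrib_left add_ac)
    also have "\<dots> = ennreal (p ^ k) * ennreal (real k ^ n)
          + (\<Sum>i\<in>{1..k}. ennreal (p ^ (k - i)) * Mc S (real (k - i) + 1) n)"
      by (simp only: h2)
    finally have e: "ennreal (p ^ k) * Mc S (real k) n + (\<Sum>i\<in>{1..k}. ennreal (p ^ (k - i)) * Mc S (real (k - i)) n)
        = ennreal (p ^ k) * ennreal (real k ^ n) + (\<Sum>i\<in>{1..k}. ennreal (p ^ (k - i)) * Mc S (real (k - i) + 1) n)" .
    have L: "ennreal (p ^ k) * Mc S (real k) n + (\<Sum>i\<in>{1..k}. ennreal (p ^ (k - i)) * Mc S (real (k - i)) n)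
        = ennreal (p ^ k * conv mr (real k) n + (\<Sum>i\<in>{1..k}. p ^ (k - i) * conv mr (real (k - i)) n))"
    proof -
      have a: "Mc S (real k) n = ennreal (conv mr (real k) n)" by (rule Mcr) simp
      have b: "Mc S (real (k - i)) n = ennreal (conv mr (real (k - i)) n)" for i by (rule Mcr) simp
      show ?thesis unfolding a b
        by (rule ennreal_lin) (use pk0 cnn in \<open>auto intro: less_imp_le\<close>)
    qed
    have R: "ennreal (p ^ k) * ennreal (real k ^ n) + (\<Sum>i\<in>{1..k}. ennreal (p ^ (k - i)) * Mc S (real (k - i) + 1) n)
        = ennreal (p ^ k * real k ^ n + (\<Sum>i\<in>{1..k}. p ^ (k - i) * conv mr (real (k - i) + 1) n))"
    proof -
      have b: "Mc S (real (k - i) + 1) n = ennreal (conv mr (real (k - i) + 1) n)" for i by (rule Mcr) simp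
      show ?thesis unfolding b
        by (rule ennreal_lin) (use pk0 cnn in \<open>auto intro: less_imp_le\<close>)
    qed
    have "ennreal (p ^ k * conv mr (real k) n + (\<Sum>i\<in>{1..k}. p ^ (k - i) * conv mr (real (k - i)) n))
        = ennreal (p ^ k * real k ^ n + (\<Sum>i\<in>{1..k}. p ^ (k - i) * conv mr (real (k - i) + 1) n))"
      unfolding L[symmetric] R[symmetric] by (rule e)
    moreover have "0 \<le> p ^ k * conv mr (real k) n + (\<Sum>i\<in>{1..k}. p ^ (k - i) * conv mr (real (k - i)) n)"
      using pk0' cnn by (auto intro!: add_nonneg_nonneg sum_nonneg mult_nonneg_nonneg)
    moreover have "0 \<le> p ^ k * real k ^ n + (\<Sum>i\<in>{1..k}. p ^ (k - i) * conv mr (real (k - i) + 1) n)"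
      using pk0' cnn by (auto intro!: add_nonneg_nonneg sum_nonneg mult_nonneg_nonneg)
    ultimately show ?thesis by (simp add: ennreal_inj)
  qed
  define Hk where "Hk = fps_const (p ^ k) * fps_exp (real k) +
           (\<Sum>i=1..k. fps_const (p ^ (k - i)) * (fps_exp (real (k - i)) - fps_exp (real (k - i + 1))))"
  have E: "egf mr * Hk = fps_const (p ^ k) * fps_exp (real k)"
  proof (rule fps_ext)
    fix n
    have "egf mr * Hk = fps_const (p ^ k) * (egf mr * fps_exp (real k)) +
           (\<Sum>i=1..k. fps_const (p ^ (k - i)) * (egf mr * fps_exp (real (k - i)) - egf mr * fps_exp (real (k - i) + 1)))"
      unfolding Hk_def by (simp add: distrib_left sum_distrib_left algebra_simps)
    then have "fps_nth (egf mr * Hk) n = p ^ k * (conv mr (real k) n / fact n) +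
           (\<Sum>i=1..k. p ^ (k - i) * (conv mr (real (k - i)) n / fact n - conv mr (real (k - i) + 1) n / fact n))"
      by (simp only: fps_add_nth fps_sub_nth fps_mult_left_const_nth egf_exp_nth fps_sum_nth)
    also have "\<dots> = (p ^ k * conv mr (real k) n + (\<Sum>i=1..k. p ^ (k - i) * conv mr (real (k - i)) n)
           - (\<Sum>i=1..k. p ^ (k - i) * conv mr (real (k - i) + 1) n)) / fact n"
      by (simp add: add_divide_distrib diff_divide_distrib sum_divide_distrib right_diff_distrib sum_subtractf)
    also have "p ^ k * conv mr (real k) n + (\<Sum>i=1..k. p ^ (k - i) * conv mr (real (k - i)) n)
           - (\<Sum>i=1..k. p ^ (k - i) * conv mr (real (k - i) + 1) n) = p ^ k * real k ^ n"
      using ident[of n] by linarith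
    finally show "fps_nth (egf mr * Hk) n = fps_nth (fps_const (p ^ k) * fps_exp (real k)) n" by simp
  qed
  have F: "egf (psum (GH p k)) * Hk = fps_const (p ^ k) * fps_exp (real k)"
    unfolding Hk_def using p_pos by (intro F_H) simp
  have H0: "fps_nth Hk 0 \<noteq> 0"
    using p_pos by (simp add: Hk_def fps_sum_nth)
  have "egf mr = egf (psum (GH p k))"
    by (rule fps_cancel[OF E F H0])
  then have "mr n = psum (GH p k) n" by (rule egf_eqD)
  then show ?thesis by (simp add: mr)
qed

end

theorem corollary4p12:
  fixes p :: real and k l n :: nat
  assumes "0 < p" and "p < 1" and "n \<ge> 1"
  shows "(k \<ge> 1 \<longrightarrow>
           (\<integral>\<^sup>+ \<omega>. ennreal (real (waiting_time (replicate k True) \<omega>) ^ n) \<partial>coin_space p)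
           = ennreal (\<Sum>P\<in>set_partitions n. (-1) ^ (n - card P) * fact (card P) *
                (\<Prod>B\<in>P. \<Sum>i=1..k. (real i ^ card B - real (i - 1) ^ card B) / p ^ i)))
       \<and> (k \<ge> 1 \<and> l \<ge> 1 \<longrightarrow>
           (\<integral>\<^sup>+ \<omega>. ennreal (real (waiting_time (replicate k True @ replicate l False) \<omega>) ^ n) \<partial>coin_space p)
           = ennreal (\<Sum>P\<in>set_partitions n. (-1) ^ (n - card P) * fact (card P) *
                (\<Prod>B\<in>P. (real (k + l) ^ card B - real (k + l - 1) ^ card B) / (p ^ k * (1 - p) ^ l))))"
proof -
  interpret coin p using assms(1,2) by unfold_locales
  show ?thesis
  proof (intro conjI impI)
    assume k: "k \<ge> 1"
    show "(\<integral>\<^sup>+ \<omega>. ennreal (real (waiting_time (replicate k True) \<omega>) ^ n) \<partial>coin_space p)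
           = ennreal (\<Sum>P\<in>set_partitions n. (-1) ^ (n - card P) * fact (card P) *
                (\<Prod>B\<in>P. \<Sum>i=1..k. (real i ^ card B - real (i - 1) ^ card B) / p ^ i))"
      using H_main[OF k, of n] by (simp add: mu_def psum_def GH_def)
  next
    assume kl: "k \<ge> 1 \<and> l \<ge> 1"
    show "(\<integral>\<^sup>+ \<omega>. ennreal (real (waiting_time (replicate k True @ replicate l False) \<omega>) ^ n) \<partial>coin_space p)
           = ennreal (\<Sum>P\<in>set_partitions n. (-1) ^ (n - card P) * fact (card P) *
                (\<Prod>B\<in>P. (real (k + l) ^ card B - real (k + l - 1) ^ card B) / (p ^ k * (1 - p) ^ l)))"
      using NO_main[of k l n] kl by (simp add: mu_def psum_def GN_def)
  qed
qed

end
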